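(* Let $R$ be a ring, $M$ an $R$-module, and $p$ a weakly associated prime of $M$. Then $\operatorname{p-depth}_{R_p}M_p=0$, i.e. $\operatorname{p-grade}(pR_p,M_p)=0$.
   Context: All rings are commutative with identity. A prime $p$ is weakly associated to $M$ if $p$ is minimal over $(0:_Rz)$ for some $z\in M$. A possibly improper regular sequence on a module $N$ over a ring $A$: each $x_i$ is a non-zero-divisor on $N/(x_1,\dots,x_{i-1})N$. $\operatorname{grade}(I,N)$ is the supremum of lengths of possibly improper regular sequences on $N$ contained in the ideal $I$. The polynomial grade is $\operatorname{p-grade}(I,N)=\lim_{m\to\infty}\operatorname{grade}(IA[t_1,\dots,t_m],A[t_1,\dots,t_m]\otimes_AN)$ ($t_i$ indeterminates). For a quasi-local ring $(A,n)$, $\operatorname{p-depth}N=\operatorname{p-grade}(n,N)$. *)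

theory Defs
  imports "HOL-Algebra.Algebra" "HOL-Library.Extended_Real"
begin

definition ann :: "('a, 'b) module \<Rightarrow> 'a ring \<Rightarrow> 'b \<Rightarrow> 'a set" where
  "ann M R z = {r \<in> carrier R. r \<odot>\<^bsub>M\<^esub> z = \<zero>\<^bsub>M\<^esub>}"

definition minimal_prime_over :: "'a ring \<Rightarrow> 'a set \<Rightarrow> 'a set \<Rightarrow> bool" where
  "minimal_prime_over R J P \<longleftrightarrow> primeideal P R \<and> J \<subseteq> P \<and>
     (\<forall>Q. primeideal Q R \<and> J \<subseteq> Q \<and> Q \<subseteq> P \<longrightarrow> Q = P)"

definition weakly_associated :: "'a ring \<Rightarrow> ('a, 'b) module \<Rightarrow> 'a set \<Rightarrow> bool" where
  "weakly_associated R M P \<longleftrightarrow> (\<exists>z \<in> carrier M. minimal_prime_over R (ann M R z) P)"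

definition loc_rel :: "'a ring \<Rightarrow> 'a set \<Rightarrow> (('a \<times> 'a) \<times> ('a \<times> 'a)) set" where
  "loc_rel R S = {((a, s), (b, t)). a \<in> carrier R \<and> s \<in> S \<and> b \<in> carrier R \<and> t \<in> S \<and>
     (\<exists>u \<in> S. u \<otimes>\<^bsub>R\<^esub> (t \<otimes>\<^bsub>R\<^esub> a \<ominus>\<^bsub>R\<^esub> s \<otimes>\<^bsub>R\<^esub> b) = \<zero>\<^bsub>R\<^esub>)}"

text \<open>The localized ring R_P; elements are equivalence classes of fractions a/s.
  Operations are given on classes via images of representative pairs.\<close>
definition loc_ring :: "'a ring \<Rightarrow> 'a set \<Rightarrow> ('a \<times> 'a) set ring" where
  "loc_ring R P = (let S = carrier R - P; r = loc_rel R S in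
     \<lparr> partial_object.carrier = (carrier R \<times> S) // r,
       monoid.mult = (\<lambda>U V. r `` {(a \<otimes>\<^bsub>R\<^esub> b, s \<otimes>\<^bsub>R\<^esub> t) | a s b t. (a, s) \<in> U \<and> (b, t) \<in> V}),
       monoid.one = r `` {(\<one>\<^bsub>R\<^esub>, \<one>\<^bsub>R\<^esub>)},
       ring.zero = r `` {(\<zero>\<^bsub>R\<^esub>, \<one>\<^bsub>R\<^esub>)},
       ring.add = (\<lambda>U V. r `` {(t \<otimes>\<^bsub>R\<^esub> a \<oplus>\<^bsub>R\<^esub> s \<otimes>\<^bsub>R\<^esub> b, s \<otimes>\<^bsub>R\<^esub> t) | a s b t.
                            (a, s) \<in> U \<and> (b, t) \<in> V}) \<rparr>)"

definition loc_map :: "'a ring \<Rightarrow> 'a set \<Rightarrow> 'a \<Rightarrow> ('a \<times> 'a) set" where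
  "loc_map R P a = loc_rel R (carrier R - P) `` {(a, \<one>\<^bsub>R\<^esub>)}"

definition loc_ideal :: "'a ring \<Rightarrow> 'a set \<Rightarrow> ('a \<times> 'a) set set" where
  "loc_ideal R P = genideal (loc_ring R P) (loc_map R P ` P)"

definition loc_mod_rel :: "'a ring \<Rightarrow> ('a, 'b) module \<Rightarrow> 'a set \<Rightarrow> (('b \<times> 'a) \<times> ('b \<times> 'a)) set" where
  "loc_mod_rel R M S = {((m, s), (n, t)). m \<in> carrier M \<and> s \<in> S \<and> n \<in> carrier M \<and> t \<in> S \<and>
     (\<exists>u \<in> S. u \<odot>\<^bsub>M\<^esub> (t \<odot>\<^bsub>M\<^esub> m \<ominus>\<^bsub>M\<^esub> s \<odot>\<^bsub>M\<^esub> n) = \<zero>\<^bsub>M\<^esub>)}"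

text \<open>The localized module M_P as an R_P-module (the multiplicative fields of the
  module record are irrelevant and left undefined).\<close>
definition loc_mod :: "'a ring \<Rightarrow> ('a, 'b) module \<Rightarrow> 'a set \<Rightarrow> (('a \<times> 'a) set, ('b \<times> 'a) set) module" where
  "loc_mod R M P = (let S = carrier R - P; r = loc_mod_rel R M S in
     \<lparr> partial_object.carrier = (carrier M \<times> S) // r,
       monoid.mult = undefined,
       monoid.one = undefined,
       ring.zero = r `` {(\<zero>\<^bsub>M\<^esub>, \<one>\<^bsub>R\<^esub>)},
       ring.add = (\<lambda>U V. r `` {(t \<odot>\<^bsub>M\<^esub> m \<oplus>\<^bsub>M\<^esub> s \<odot>\<^bsub>M\<^esub> n, s \<otimes>\<^bsub>R\<^esub> t) | m s n t.
                            (m, s) \<in> U \<and> (n, t) \<in> V}),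
       module.smult = (\<lambda>U V. r `` {(a \<odot>\<^bsub>M\<^esub> m, s \<otimes>\<^bsub>R\<^esub> t) | a s m t. (a, s) \<in> U \<and> (m, t) \<in> V}) \<rparr>)"

text \<open>Monomials in the first m variables are exponent vectors vanishing from index m on.\<close>
definition mons :: "nat \<Rightarrow> (nat \<Rightarrow> nat) set" where
  "mons m = {\<alpha>. \<forall>i\<ge>m. \<alpha> i = 0}"

definition divs :: "nat \<Rightarrow> (nat \<Rightarrow> nat) \<Rightarrow> (nat \<Rightarrow> nat) set" where
  "divs m \<alpha> = {\<beta>. (\<forall>i. \<beta> i \<le> \<alpha> i) \<and> \<beta> \<in> mons m}"

definition poly_ring :: "'c ring \<Rightarrow> nat \<Rightarrow> ((nat \<Rightarrow> nat) \<Rightarrow> 'c) ring" where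
  "poly_ring A m =
     \<lparr> partial_object.carrier = {f. (\<forall>\<alpha>. f \<alpha> \<in> carrier A) \<and> (\<forall>\<alpha>. \<alpha> \<notin> mons m \<longrightarrow> f \<alpha> = \<zero>\<^bsub>A\<^esub>)
                     \<and> finite {\<alpha>. f \<alpha> \<noteq> \<zero>\<^bsub>A\<^esub>}},
       monoid.mult = (\<lambda>f g \<alpha>. if \<alpha> \<in> mons m
                 then finsum A (\<lambda>\<beta>. f \<beta> \<otimes>\<^bsub>A\<^esub> g (\<lambda>i. \<alpha> i - \<beta> i)) (divs m \<alpha>)
                 else \<zero>\<^bsub>A\<^esub>),
       monoid.one = (\<lambda>\<alpha>. if \<alpha> = (\<lambda>_. 0) then \<one>\<^bsub>A\<^esub> else \<zero>\<^bsub>A\<^esub>),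
       ring.zero = (\<lambda>\<alpha>. \<zero>\<^bsub>A\<^esub>),
       ring.add = (\<lambda>f g \<alpha>. f \<alpha> \<oplus>\<^bsub>A\<^esub> g \<alpha>) \<rparr>"

definition const_poly :: "'c ring \<Rightarrow> 'c \<Rightarrow> ((nat \<Rightarrow> nat) \<Rightarrow> 'c)" where
  "const_poly A c = (\<lambda>\<alpha>. if \<alpha> = (\<lambda>_. 0) then c else \<zero>\<^bsub>A\<^esub>)"

text \<open>A[t_1..t_m] \<otimes>_A N, realised (canonically) as the A[t]-module N[t_1..t_m] of
  polynomials with coefficients in N.\<close>
definition poly_mod :: "'c ring \<Rightarrow> ('c, 'd) module \<Rightarrow> nat \<Rightarrow> ((nat \<Rightarrow> nat) \<Rightarrow> 'c, (nat \<Rightarrow> nat) \<Rightarrow> 'd) module" where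
  "poly_mod A N m =
     \<lparr> partial_object.carrier = {v. (\<forall>\<alpha>. v \<alpha> \<in> carrier N) \<and> (\<forall>\<alpha>. \<alpha> \<notin> mons m \<longrightarrow> v \<alpha> = \<zero>\<^bsub>N\<^esub>)
                     \<and> finite {\<alpha>. v \<alpha> \<noteq> \<zero>\<^bsub>N\<^esub>}},
       monoid.mult = undefined,
       monoid.one = undefined,
       ring.zero = (\<lambda>\<alpha>. \<zero>\<^bsub>N\<^esub>),
       ring.add = (\<lambda>v w \<alpha>. v \<alpha> \<oplus>\<^bsub>N\<^esub> w \<alpha>),
       module.smult = (\<lambda>f v \<alpha>. if \<alpha> \<in> mons m
                 then finsum N (\<lambda>\<beta>. f \<beta> \<odot>\<^bsub>N\<^esub> v (\<lambda>i. \<alpha> i - \<beta> i)) (divs m \<alpha>)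
                 else \<zero>\<^bsub>N\<^esub>) \<rparr>"

definition seq_submod :: "('c, 'd) module \<Rightarrow> 'c list \<Rightarrow> 'd set" where
  "seq_submod N ys = {finsum N (\<lambda>j. (ys ! j) \<odot>\<^bsub>N\<^esub> w j) {..<length ys} | w.
                        w \<in> {..<length ys} \<rightarrow> carrier N}"

text \<open>Possibly improper regular sequence: each x_i is a non-zero-divisor on
  N/(x_1,...,x_{i-1})N.\<close>
definition reg_seq :: "'c ring \<Rightarrow> ('c, 'd) module \<Rightarrow> 'c list \<Rightarrow> bool" where
  "reg_seq A N xs \<longleftrightarrow> set xs \<subseteq> carrier A \<and>
     (\<forall>i < length xs. \<forall>v \<in> carrier N.
        (xs ! i) \<odot>\<^bsub>N\<^esub> v \<in> seq_submod N (take i xs) \<longrightarrow> v \<in> seq_submod N (take i xs))"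

definition grade :: "'c ring \<Rightarrow> 'c set \<Rightarrow> ('c, 'd) module \<Rightarrow> enat" where
  "grade A I N = Sup {enat (length xs) | xs. reg_seq A N xs \<and> set xs \<subseteq> I}"

definition p_grade :: "'c ring \<Rightarrow> 'c set \<Rightarrow> ('c, 'd) module \<Rightarrow> enat" where
  "p_grade A I N = lim (\<lambda>m. grade (poly_ring A m)
                              (genideal (poly_ring A m) (const_poly A ` I))
                              (poly_mod A N m))"

end

theory Submission
  imports Defs
begin

lemma equiv_class_of_set:
  assumes "equiv A r" "x \<in> T" "\<And>y. y \<in> T \<Longrightarrow> (x, y) \<in> r"
  shows "r `` T = r `` {x}"
proof
  show "r `` {x} \<subseteq> r `` T" using assms(2) by auto
  show "r `` T \<subseteq> r `` {x}"
  proof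
    fix w assume "w \<in> r `` T"
    then obtain y where "y \<in> T" "(y, w) \<in> r" by auto
    with assms have "(x,y) \<in> r" by auto
    with \<open>(y,w)\<in>r\<close> assms(1) have "(x,w) \<in> r" by (meson equiv_def trans_def)
    thus "w \<in> r `` {x}" by auto
  qed
qed

locale lp = primeideal I R for I :: "'a set" and R :: "'a ring" (structure)

context lp
begin

abbreviation "Sc \<equiv> carrier R - I"
abbreviation "lr \<equiv> loc_rel R Sc"
abbreviation "cls a s \<equiv> lr `` {(a, s)}"

lemma Icarr': "I \<subseteq> carrier R" using a_subset by blast

lemma S_one: "\<one> \<in> Sc" using I_notcarr one_imp_carrier by blast
lemma S_mult: "s \<in> Sc \<Longrightarrow> t \<in> Sc \<Longrightarrow> s \<otimes> t \<in> Sc"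
  using I_prime by auto

lemma S_mult'[simp]: "s \<in> carrier R \<Longrightarrow> s \<notin> I \<Longrightarrow> t \<in> carrier R \<Longrightarrow> t \<notin> I \<Longrightarrow> s \<otimes> t \<notin> I"
  using I_prime by auto

lemma rel_iff: "((a, s), (b, t)) \<in> lr \<longleftrightarrow>
   a \<in> carrier R \<and> s \<in> Sc \<and> b \<in> carrier R \<and> t \<in> Sc \<and>
   (\<exists>u \<in> Sc. u \<otimes> (t \<otimes> a) = u \<otimes> (s \<otimes> b))"
proof -
  have "u \<otimes> (t \<otimes> a \<ominus> s \<otimes> b) = \<zero> \<longleftrightarrow> u \<otimes> (t \<otimes> a) = u \<otimes> (s \<otimes> b)"
    if "a \<in> carrier R" "b \<in> carrier R" "s \<in> carrier R" "t \<in> carrier R" "u \<in> carrier R" for u a b s t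
  proof -
    have "u \<otimes> (t \<otimes> a \<ominus> s \<otimes> b) = u \<otimes> (t \<otimes> a) \<ominus> u \<otimes> (s \<otimes> b)"
      using that by (simp add: minus_eq r_distr r_minus)
    thus ?thesis using that by simp
  qed
  thus ?thesis unfolding loc_rel_def by auto
qed

lemma equiv_lr: "equiv (carrier R \<times> Sc) lr"
proof (rule equivI)
  show "lr \<subseteq> (carrier R \<times> Sc) \<times> (carrier R \<times> Sc)"
    unfolding loc_rel_def by auto
  show "refl_on (carrier R \<times> Sc) lr"
    unfolding refl_on_def
  proof
    fix x assume "x \<in> carrier R \<times> Sc"
    then show "(x, x) \<in> lr" using S_one by (cases x) (auto simp: rel_iff)
  qed
  show "sym lr"
    unfolding sym_def
  proof (intro allI impI)
    fix x y assume "(x, y) \<in> lr"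
    then show "(y, x) \<in> lr" by (cases x, cases y) (simp add: rel_iff, metis)
  qed
  show "trans lr"
    unfolding trans_def
  proof (intro allI impI)
    fix x y z assume xy: "(x, y) \<in> lr" and yz: "(y, z) \<in> lr"
    obtain a s where x: "x = (a, s)" by (cases x)
    obtain b t where y: "y = (b, t)" by (cases y)
    obtain c w where z: "z = (c, w)" by (cases z)
    from xy obtain u where u: "u \<in> Sc" "u \<otimes> (t \<otimes> a) = u \<otimes> (s \<otimes> b)"
      and c1: "a \<in> carrier R" "s \<in> Sc" "b \<in> carrier R" "t \<in> Sc"
      unfolding x y rel_iff by blast
    from yz obtain v where v: "v \<in> Sc" "v \<otimes> (w \<otimes> b) = v \<otimes> (t \<otimes> c)"
      and c2: "c \<in> carrier R" "w \<in> Sc"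
      unfolding y z rel_iff by blast
    have cs: "a \<in> carrier R" "b \<in> carrier R" "c \<in> carrier R" "s \<in> carrier R" "t \<in> carrier R"
      "w \<in> carrier R" "u \<in> carrier R" "v \<in> carrier R" using c1 c2 u v by auto
    have "(u \<otimes> v \<otimes> t) \<otimes> (w \<otimes> a) = (v \<otimes> w) \<otimes> (u \<otimes> (t \<otimes> a))" using cs by (simp add: m_ac)
    also have "\<dots> = (v \<otimes> w) \<otimes> (u \<otimes> (s \<otimes> b))" using u by simp
    also have "\<dots> = (u \<otimes> s) \<otimes> (v \<otimes> (w \<otimes> b))" using cs by (simp add: m_ac)
    also have "\<dots> = (u \<otimes> s) \<otimes> (v \<otimes> (t \<otimes> c))" using v by simp
    also have "\<dots> = (u \<otimes> v \<otimes> t) \<otimes> (s \<otimes> c)" using cs by (simp add: m_ac)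
    finally have "(u \<otimes> v \<otimes> t) \<otimes> (w \<otimes> a) = (u \<otimes> v \<otimes> t) \<otimes> (s \<otimes> c)" .
    moreover have "u \<otimes> v \<otimes> t \<in> Sc" using S_mult u v c1 by auto
    ultimately show "(x, z) \<in> lr" unfolding x z rel_iff using c1 c2 by blast
  qed
qed

lemma cls_eq: "a \<in> carrier R \<Longrightarrow> s \<in> Sc \<Longrightarrow> b \<in> carrier R \<Longrightarrow> t \<in> Sc \<Longrightarrow>
  cls a s = cls b t \<longleftrightarrow> (\<exists>u \<in> Sc. u \<otimes> (t \<otimes> a) = u \<otimes> (s \<otimes> b))"
  by (subst eq_equiv_class_iff[OF equiv_lr]) (auto simp: rel_iff)

lemma cls_eqI: "a \<in> carrier R \<Longrightarrow> s \<in> Sc \<Longrightarrow> b \<in> carrier R \<Longrightarrow> t \<in> Sc \<Longrightarrow>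
  t \<otimes> a = s \<otimes> b \<Longrightarrow> cls a s = cls b t"
  using cls_eq S_one by force

lemma cls_mem: "a \<in> carrier R \<Longrightarrow> s \<in> Sc \<Longrightarrow> (a, s) \<in> cls a s"
  using equiv_class_self[OF equiv_lr, of "(a, s)"] by simp

lemma mem_cls: "(b, t) \<in> cls a s \<Longrightarrow> ((a, s), (b, t)) \<in> lr" by simp

lemma mult_compat:
  assumes "((a, s), (a', s')) \<in> lr" "((b, t), (b', t')) \<in> lr"
  shows "((a \<otimes> b, s \<otimes> t), (a' \<otimes> b', s' \<otimes> t')) \<in> lr"
proof -
  from assms(1) obtain u where u: "u \<in> Sc" "u \<otimes> (s' \<otimes> a) = u \<otimes> (s \<otimes> a')"
    and c1: "a \<in> carrier R" "s \<in> Sc" "a' \<in> carrier R" "s' \<in> Sc" unfolding rel_iff by blast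
  from assms(2) obtain v where v: "v \<in> Sc" "v \<otimes> (t' \<otimes> b) = v \<otimes> (t \<otimes> b')"
    and c2: "b \<in> carrier R" "t \<in> Sc" "b' \<in> carrier R" "t' \<in> Sc" unfolding rel_iff by blast
  have cs: "a \<in> carrier R" "b \<in> carrier R" "a' \<in> carrier R" "b' \<in> carrier R" "s \<in> carrier R" "t \<in> carrier R"
      "s' \<in> carrier R" "t' \<in> carrier R" "u \<in> carrier R" "v \<in> carrier R" using c1 c2 u v by auto
  have "(u \<otimes> v) \<otimes> ((s' \<otimes> t') \<otimes> (a \<otimes> b)) = (u \<otimes> (s' \<otimes> a)) \<otimes> (v \<otimes> (t' \<otimes> b))"
    using cs by (simp add: m_ac)
  also have "\<dots> = (u \<otimes> (s \<otimes> a')) \<otimes> (v \<otimes> (t \<otimes> b'))" using u v by simp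
  also have "\<dots> = (u \<otimes> v) \<otimes> ((s \<otimes> t) \<otimes> (a' \<otimes> b'))" using cs by (simp add: m_ac)
  finally show ?thesis unfolding rel_iff using c1 c2 u v S_mult by auto
qed

lemma add_compat:
  assumes "((a, s), (a', s')) \<in> lr" "((b, t), (b', t')) \<in> lr"
  shows "((t \<otimes> a \<oplus> s \<otimes> b, s \<otimes> t), (t' \<otimes> a' \<oplus> s' \<otimes> b', s' \<otimes> t')) \<in> lr"
proof -
  from assms(1) obtain u where u: "u \<in> Sc" "u \<otimes> (s' \<otimes> a) = u \<otimes> (s \<otimes> a')"
    and c1: "a \<in> carrier R" "s \<in> Sc" "a' \<in> carrier R" "s' \<in> Sc" unfolding rel_iff by blast
  from assms(2) obtain v where v: "v \<in> Sc" "v \<otimes> (t' \<otimes> b) = v \<otimes> (t \<otimes> b')"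
    and c2: "b \<in> carrier R" "t \<in> Sc" "b' \<in> carrier R" "t' \<in> Sc" unfolding rel_iff by blast
  have cs: "a \<in> carrier R" "b \<in> carrier R" "a' \<in> carrier R" "b' \<in> carrier R" "s \<in> carrier R" "t \<in> carrier R"
      "s' \<in> carrier R" "t' \<in> carrier R" "u \<in> carrier R" "v \<in> carrier R" using c1 c2 u v by auto
  have "(u \<otimes> v) \<otimes> ((s' \<otimes> t') \<otimes> (t \<otimes> a \<oplus> s \<otimes> b)) =
      (u \<otimes> (s' \<otimes> a)) \<otimes> (v \<otimes> t' \<otimes> t) \<oplus> (v \<otimes> (t' \<otimes> b)) \<otimes> (u \<otimes> s' \<otimes> s)"
    using cs by (simp add: m_ac r_distr)
  also have "\<dots> = (u \<otimes> (s \<otimes> a')) \<otimes> (v \<otimes> t' \<otimes> t) \<oplus> (v \<otimes> (t \<otimes> b')) \<otimes> (u \<otimes> s' \<otimes> s)"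
    using u v by simp
  also have "\<dots> = (u \<otimes> v) \<otimes> ((s \<otimes> t) \<otimes> (t' \<otimes> a' \<oplus> s' \<otimes> b'))"
    using cs by (simp add: m_ac r_distr)
  finally show ?thesis unfolding rel_iff using c1 c2 u v S_mult by auto
qed

lemma loc_carrier: "carrier (loc_ring R I) = (carrier R \<times> Sc) // lr"
  unfolding loc_ring_def Let_def by simp

lemma loc_zero: "\<zero>\<^bsub>loc_ring R I\<^esub> = cls \<zero> \<one>"
  unfolding loc_ring_def Let_def by simp

lemma loc_one: "\<one>\<^bsub>loc_ring R I\<^esub> = cls \<one> \<one>"
  unfolding loc_ring_def Let_def by simp

lemma loc_mult: "a \<in> carrier R \<Longrightarrow> s \<in> Sc \<Longrightarrow> b \<in> carrier R \<Longrightarrow> t \<in> Sc \<Longrightarrow>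
  cls a s \<otimes>\<^bsub>loc_ring R I\<^esub> cls b t = cls (a \<otimes> b) (s \<otimes> t)"
  unfolding loc_ring_def Let_def
  apply simp
  apply (rule equiv_class_of_set[OF equiv_lr])
   apply (use cls_mem in blast)
  apply (auto intro: mult_compat)
  done

lemma loc_add: "a \<in> carrier R \<Longrightarrow> s \<in> Sc \<Longrightarrow> b \<in> carrier R \<Longrightarrow> t \<in> Sc \<Longrightarrow>
  cls a s \<oplus>\<^bsub>loc_ring R I\<^esub> cls b t = cls (t \<otimes> a \<oplus> s \<otimes> b) (s \<otimes> t)"
  unfolding loc_ring_def Let_def
  apply simp
  apply (rule equiv_class_of_set[OF equiv_lr])
   apply (use cls_mem in blast)
  apply (auto intro: add_compat)
  done

lemma loc_elem:
  assumes "U \<in> carrier (loc_ring R I)"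
  obtains a s where "a \<in> carrier R" "s \<in> Sc" "U = cls a s"
  using assms unfolding loc_carrier by (auto elim!: quotientE)

lemma cls_in: "a \<in> carrier R \<Longrightarrow> s \<in> Sc \<Longrightarrow> cls a s \<in> carrier (loc_ring R I)"
  unfolding loc_carrier by (auto intro: quotientI)

lemma loc_cring: "cring (loc_ring R I)"
proof (rule cringI)
  show "abelian_group (loc_ring R I)"
  proof (rule abelian_groupI)
    fix x y assume "x \<in> carrier (loc_ring R I)" "y \<in> carrier (loc_ring R I)"
    then show "x \<oplus>\<^bsub>loc_ring R I\<^esub> y \<in> carrier (loc_ring R I)"
      by (auto elim!: loc_elem simp: loc_add intro!: cls_in S_mult)
  next
    show "\<zero>\<^bsub>loc_ring R I\<^esub> \<in> carrier (loc_ring R I)" unfolding loc_zero using S_one by (intro cls_in) auto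
  next
    fix x y z assume "x \<in> carrier (loc_ring R I)" "y \<in> carrier (loc_ring R I)" "z \<in> carrier (loc_ring R I)"
    then show "x \<oplus>\<^bsub>loc_ring R I\<^esub> y \<oplus>\<^bsub>loc_ring R I\<^esub> z = x \<oplus>\<^bsub>loc_ring R I\<^esub> (y \<oplus>\<^bsub>loc_ring R I\<^esub> z)"
      by (auto elim!: loc_elem simp: loc_add S_mult m_ac r_distr a_ac)
  next
    fix x y assume "x \<in> carrier (loc_ring R I)" "y \<in> carrier (loc_ring R I)"
    then show "x \<oplus>\<^bsub>loc_ring R I\<^esub> y = y \<oplus>\<^bsub>loc_ring R I\<^esub> x"
      by (auto elim!: loc_elem simp: loc_add S_mult m_ac a_ac)
  next
    fix x assume "x \<in> carrier (loc_ring R I)"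
    then show "\<zero>\<^bsub>loc_ring R I\<^esub> \<oplus>\<^bsub>loc_ring R I\<^esub> x = x"
      using S_one by (auto elim!: loc_elem simp: loc_add loc_zero)
  next
    fix x assume "x \<in> carrier (loc_ring R I)"
    then obtain a s where as: "a \<in> carrier R" "s \<in> Sc" "x = cls a s" by (auto elim: loc_elem)
    have "cls (\<ominus> a) s \<oplus>\<^bsub>loc_ring R I\<^esub> x = cls (s \<otimes> \<ominus> a \<oplus> s \<otimes> a) (s \<otimes> s)"
      using as by (simp add: loc_add)
    also have "\<dots> = cls \<zero> (s \<otimes> s)" using as by (simp add: r_minus l_neg)
    also have "\<dots> = cls \<zero> \<one>" using as S_one S_mult by (intro cls_eqI) auto
    finally show "\<exists>y\<in>carrier (loc_ring R I). y \<oplus>\<^bsub>loc_ring R I\<^esub> x = \<zero>\<^bsub>loc_ring R I\<^esub>"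
      using as by (auto intro!: bexI[of _ "cls (\<ominus> a) s"] cls_in simp: loc_zero)
  qed
next
  show "comm_monoid (loc_ring R I)"
  proof (rule comm_monoidI)
    fix x y assume "x \<in> carrier (loc_ring R I)" "y \<in> carrier (loc_ring R I)"
    then show "x \<otimes>\<^bsub>loc_ring R I\<^esub> y \<in> carrier (loc_ring R I)"
      by (auto elim!: loc_elem simp: loc_mult intro!: cls_in S_mult)
  next
    show "\<one>\<^bsub>loc_ring R I\<^esub> \<in> carrier (loc_ring R I)" unfolding loc_one using S_one by (intro cls_in) auto
  next
    fix x y z assume "x \<in> carrier (loc_ring R I)" "y \<in> carrier (loc_ring R I)" "z \<in> carrier (loc_ring R I)"
    then show "x \<otimes>\<^bsub>loc_ring R I\<^esub> y \<otimes>\<^bsub>loc_ring R I\<^esub> z = x \<otimes>\<^bsub>loc_ring R I\<^esub> (y \<otimes>\<^bsub>loc_ring R I\<^esub> z)"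
      by (auto elim!: loc_elem simp: loc_mult S_mult m_ac)
  next
    fix x assume "x \<in> carrier (loc_ring R I)"
    then show "\<one>\<^bsub>loc_ring R I\<^esub> \<otimes>\<^bsub>loc_ring R I\<^esub> x = x"
      using S_one by (auto elim!: loc_elem simp: loc_mult loc_one)
  next
    fix x y assume "x \<in> carrier (loc_ring R I)" "y \<in> carrier (loc_ring R I)"
    then show "x \<otimes>\<^bsub>loc_ring R I\<^esub> y = y \<otimes>\<^bsub>loc_ring R I\<^esub> x"
      by (auto elim!: loc_elem simp: loc_mult S_mult m_ac)
  qed
next
  fix x y z assume "x \<in> carrier (loc_ring R I)" "y \<in> carrier (loc_ring R I)" "z \<in> carrier (loc_ring R I)"
  then obtain a s b t c w where abc: "a \<in> carrier R" "s \<in> Sc" "x = cls a s"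
    "b \<in> carrier R" "t \<in> Sc" "y = cls b t" "c \<in> carrier R" "w \<in> Sc" "z = cls c w"
    by (metis loc_elem)
  have e1: "(x \<oplus>\<^bsub>loc_ring R I\<^esub> y) \<otimes>\<^bsub>loc_ring R I\<^esub> z = cls ((t \<otimes> a \<oplus> s \<otimes> b) \<otimes> c) ((s \<otimes> t) \<otimes> w)"
    using abc by (simp add: loc_add loc_mult S_mult)
  have e2: "x \<otimes>\<^bsub>loc_ring R I\<^esub> z \<oplus>\<^bsub>loc_ring R I\<^esub> y \<otimes>\<^bsub>loc_ring R I\<^esub> z =
     cls ((t \<otimes> w) \<otimes> (a \<otimes> c) \<oplus> (s \<otimes> w) \<otimes> (b \<otimes> c)) ((s \<otimes> w) \<otimes> (t \<otimes> w))"
    using abc by (simp add: loc_add loc_mult S_mult)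
  show "(x \<oplus>\<^bsub>loc_ring R I\<^esub> y) \<otimes>\<^bsub>loc_ring R I\<^esub> z = x \<otimes>\<^bsub>loc_ring R I\<^esub> z \<oplus>\<^bsub>loc_ring R I\<^esub> y \<otimes>\<^bsub>loc_ring R I\<^esub> z"
    unfolding e1 e2 using abc S_mult
    by (intro cls_eqI) (auto simp: m_ac l_distr r_distr)
qed

end

lemma (in abelian_monoid) finsum_Sigma:
  assumes "finite A" "\<And>a. a \<in> A \<Longrightarrow> finite (B a)"
    "\<And>a b. a \<in> A \<Longrightarrow> b \<in> B a \<Longrightarrow> f a b \<in> carrier G"
  shows "finsum G (\<lambda>a. finsum G (f a) (B a)) A = finsum G (\<lambda>p. f (fst p) (snd p)) (Sigma A B)"
using assms proof (induction A rule: finite_induct)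
  case empty then show ?case by simp
next
  case (insert a A)
  have disj: "Pair a ` B a \<inter> Sigma A B = {}" using insert(2) by auto
  have c1: "f a \<in> B a \<rightarrow> carrier G" using insert(5) by auto
  have c2: "(\<lambda>a. finsum G (f a) (B a)) \<in> A \<rightarrow> carrier G"
  proof
    fix x assume "x \<in> A" then show "finsum G (f x) (B x) \<in> carrier G"
      using insert(5) by (intro finsum_closed) auto
  qed
  have "finsum G (\<lambda>a. finsum G (f a) (B a)) (insert a A) = finsum G (f a) (B a) \<oplus> finsum G (\<lambda>a. finsum G (f a) (B a)) A"
    by (rule finsum_insert) (use insert c1 c2 in \<open>simp_all add: finsum_closed\<close>)
  also have "finsum G (\<lambda>a. finsum G (f a) (B a)) A = finsum G (\<lambda>p. f (fst p) (snd p)) (Sigma A B)"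
    using insert by simp
  also have "finsum G (f a) (B a) = finsum G (\<lambda>p. f (fst p) (snd p)) (Pair a ` B a)"
  proof (subst finsum_reindex)
    show "(\<lambda>p. f (fst p) (snd p)) \<in> Pair a ` B a \<rightarrow> carrier G" using c1 by auto
    show "inj_on (Pair a) (B a)" by (simp add: inj_on_def)
  qed simp
  also have "\<dots> \<oplus> finsum G (\<lambda>p. f (fst p) (snd p)) (Sigma A B) = finsum G (\<lambda>p. f (fst p) (snd p)) (Pair a ` B a \<union> Sigma A B)"
  proof (rule finsum_Un_disjoint[symmetric])
    show "finite (Pair a ` B a)" using insert by simp
    show "finite (Sigma A B)" using insert by (simp add: finite_SigmaI)
    show "Pair a ` B a \<inter> Sigma A B = {}" by (rule disj)
    show "(\<lambda>p. f (fst p) (snd p)) \<in> Pair a ` B a \<rightarrow> carrier G" using c1 by auto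
    show "(\<lambda>p. f (fst p) (snd p)) \<in> Sigma A B \<rightarrow> carrier G" using insert(5) by auto
  qed
  also have "Pair a ` B a \<union> Sigma A B = Sigma (insert a A) B" by auto
  finally show ?case .
qed

lemma (in cring) ideal_crit:
  assumes "J \<subseteq> carrier R" "\<zero> \<in> J" "\<And>a b. a \<in> J \<Longrightarrow> b \<in> J \<Longrightarrow> a \<oplus> b \<in> J"
    "\<And>a x. a \<in> J \<Longrightarrow> x \<in> carrier R \<Longrightarrow> x \<otimes> a \<in> J"
  shows "ideal J R"
proof (rule idealI)
  show "ring R" ..
  show "subgroup J (add_monoid R)"
  proof (rule add.subgroupI)
    show "J \<subseteq> carrier R" "J \<noteq> {}" using assms by auto
    fix a assume "a \<in> J"
    then have "a \<in> carrier R" using assms by auto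
    then have "\<ominus> a = (\<ominus> \<one>) \<otimes> a" using l_minus[of \<one> a] by simp
    then show "\<ominus> a \<in> J" using assms(4) \<open>a \<in> J\<close> by simp
  next
    fix a b assume "a \<in> J" "b \<in> J" then show "a \<oplus> b \<in> J" using assms by auto
  qed
  fix a x assume "a \<in> J" "x \<in> carrier R"
  then show "x \<otimes> a \<in> J" using assms by auto
  then show "a \<otimes> x \<in> J" using m_comm \<open>a \<in> J\<close> \<open>x \<in> carrier R\<close> assms(1) by auto
qed

lemma (in ring) ideal_finsum:
  assumes "ideal J R" "finite A" "\<And>a. a \<in> A \<Longrightarrow> f a \<in> J"
  shows "finsum R f A \<in> J"
  using assms(2,3)
proof (induction A rule: finite_induct)
  case empty
  then show ?case using additive_subgroup.zero_closed[OF ideal.axioms(1)[OF assms(1)]] by simp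
next
  case (insert a A)
  have sub: "J \<subseteq> carrier R" using ideal.Icarr[OF assms(1)] by blast
  have "finsum R f (insert a A) = f a \<oplus> finsum R f A"
    using insert sub by (intro finsum_insert) auto
  then show ?case using insert additive_subgroup.a_closed[OF ideal.axioms(1)[OF assms(1)]] by simp
qed

lemma divs_finite: "finite (divs m \<alpha>)"
proof -
  have "inj_on (\<lambda>\<beta>. restrict \<beta> {..<m}) (divs m \<alpha>)"
  proof (rule inj_onI)
    fix x y assume a: "x \<in> divs m \<alpha>" "y \<in> divs m \<alpha>" "restrict x {..<m} = restrict y {..<m}"
    show "x = y"
    proof
      fix i show "x i = y i"
      proof (cases "i < m")
        case True then show ?thesis using a(3) by (metis lessThan_iff restrict_apply')
      next
        case False then show ?thesis using a(1,2) unfolding divs_def mons_def by auto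
      qed
    qed
  qed
  moreover have "(\<lambda>\<beta>. restrict \<beta> {..<m}) ` divs m \<alpha> \<subseteq> PiE {..<m} (\<lambda>i. {..\<alpha> i})"
    by (auto simp: PiE_iff divs_def split: if_splits)
  moreover have "finite (PiE {..<m} (\<lambda>i. {..\<alpha> i}))" by (intro finite_PiE) auto
  ultimately show ?thesis by (meson finite_imageD finite_subset)
qed

lemma mons_le: assumes "\<alpha> \<in> mons m" "\<And>i. \<beta> i \<le> \<alpha> i" shows "\<beta> \<in> mons m"
  unfolding mons_def
proof (intro CollectI allI impI)
  fix i assume "m \<le> i"
  then have "\<alpha> i = 0" using assms(1) by (simp add: mons_def)
  then show "\<beta> i = 0" using assms(2)[of i] by simp
qed

lemma mons_sub: "\<alpha> \<in> mons m \<Longrightarrow> (\<lambda>i. \<alpha> i - \<beta> i) \<in> mons m"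
  unfolding mons_def by auto

lemma mons_zero: "(\<lambda>_. 0) \<in> mons m"
  unfolding mons_def by auto

lemma divs_iff: "\<alpha> \<in> mons m \<Longrightarrow> \<beta> \<in> divs m \<alpha> \<longleftrightarrow> (\<forall>i. \<beta> i \<le> \<alpha> i)"
  unfolding divs_def using mons_le by blast

locale cr = cring R for R :: "'a ring" (structure)

context cr
begin

lemma poly_carrier: "f \<in> carrier (poly_ring R m) \<longleftrightarrow>
  (\<forall>\<alpha>. f \<alpha> \<in> carrier R) \<and> (\<forall>\<alpha>. \<alpha> \<notin> mons m \<longrightarrow> f \<alpha> = \<zero>) \<and> finite {\<alpha>. f \<alpha> \<noteq> \<zero>}"
  unfolding poly_ring_def by simp

lemma poly_mult: "f \<otimes>\<^bsub>poly_ring R m\<^esub> g = (\<lambda>\<alpha>. if \<alpha> \<in> mons m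
                 then finsum R (\<lambda>\<beta>. f \<beta> \<otimes> g (\<lambda>i. \<alpha> i - \<beta> i)) (divs m \<alpha>) else \<zero>)"
  unfolding poly_ring_def by simp

lemma poly_add: "f \<oplus>\<^bsub>poly_ring R m\<^esub> g = (\<lambda>\<alpha>. f \<alpha> \<oplus> g \<alpha>)"
  unfolding poly_ring_def by simp

lemma poly_zero: "\<zero>\<^bsub>poly_ring R m\<^esub> = (\<lambda>\<alpha>. \<zero>)"
  unfolding poly_ring_def by simp

lemma poly_one: "\<one>\<^bsub>poly_ring R m\<^esub> = (\<lambda>\<alpha>. if \<alpha> = (\<lambda>_. 0) then \<one> else \<zero>)"
  unfolding poly_ring_def by simp

lemma pc_val: "f \<in> carrier (poly_ring R m) \<Longrightarrow> f \<alpha> \<in> carrier R"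
  by (simp add: poly_carrier)

lemma pc_out: "f \<in> carrier (poly_ring R m) \<Longrightarrow> \<alpha> \<notin> mons m \<Longrightarrow> f \<alpha> = \<zero>"
  by (simp add: poly_carrier)

lemma pc_fin: "f \<in> carrier (poly_ring R m) \<Longrightarrow> finite {\<alpha>. f \<alpha> \<noteq> \<zero>}"
  by (simp add: poly_carrier)

lemma poly_mult_closed:
  assumes f: "f \<in> carrier (poly_ring R m)" and g: "g \<in> carrier (poly_ring R m)"
  shows "f \<otimes>\<^bsub>poly_ring R m\<^esub> g \<in> carrier (poly_ring R m)"
proof -
  let ?h = "f \<otimes>\<^bsub>poly_ring R m\<^esub> g"
  have val: "?h \<alpha> \<in> carrier R" for \<alpha>
    unfolding poly_mult using pc_val[OF f] pc_val[OF g] by (auto intro!: finsum_closed)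
  have out: "?h \<alpha> = \<zero>" if "\<alpha> \<notin> mons m" for \<alpha> unfolding poly_mult using that by simp
  have "{\<alpha>. ?h \<alpha> \<noteq> \<zero>} \<subseteq> (\<lambda>(\<beta>, \<gamma>). (\<lambda>i. \<beta> i + \<gamma> i)) ` ({\<beta>. f \<beta> \<noteq> \<zero>} \<times> {\<gamma>. g \<gamma> \<noteq> \<zero>})"
  proof
    fix \<alpha> assume "\<alpha> \<in> {\<alpha>. ?h \<alpha> \<noteq> \<zero>}"
    then have ne: "?h \<alpha> \<noteq> \<zero>" by simp
    then have am: "\<alpha> \<in> mons m" using out by blast
    have "\<exists>\<beta>\<in>divs m \<alpha>. f \<beta> \<otimes> g (\<lambda>i. \<alpha> i - \<beta> i) \<noteq> \<zero>"
    proof (rule ccontr)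
      assume "\<not> ?thesis"
      then have "finsum R (\<lambda>\<beta>. f \<beta> \<otimes> g (\<lambda>i. \<alpha> i - \<beta> i)) (divs m \<alpha>) = \<zero>"
        by (intro add.finprod_one_eqI) auto
      then show False using ne am unfolding poly_mult by simp
    qed
    then obtain \<beta> where b: "\<beta> \<in> divs m \<alpha>" "f \<beta> \<otimes> g (\<lambda>i. \<alpha> i - \<beta> i) \<noteq> \<zero>" by blast
    have "f \<beta> \<noteq> \<zero>"
    proof
      assume "f \<beta> = \<zero>"
      then have "f \<beta> \<otimes> g (\<lambda>i. \<alpha> i - \<beta> i) = \<zero>" using pc_val[OF g] by simp
      then show False using b(2) by simp
    qed
    moreover have "g (\<lambda>i. \<alpha> i - \<beta> i) \<noteq> \<zero>"
    proof
      assume "g (\<lambda>i. \<alpha> i - \<beta> i) = \<zero>"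
      then have "f \<beta> \<otimes> g (\<lambda>i. \<alpha> i - \<beta> i) = \<zero>" using pc_val[OF f] by simp
      then show False using b(2) by simp
    qed
    moreover have "\<alpha> = (\<lambda>i. \<beta> i + (\<alpha> i - \<beta> i))" using b(1) unfolding divs_def by auto
    ultimately show "\<alpha> \<in> (\<lambda>(\<beta>, \<gamma>). (\<lambda>i. \<beta> i + \<gamma> i)) ` ({\<beta>. f \<beta> \<noteq> \<zero>} \<times> {\<gamma>. g \<gamma> \<noteq> \<zero>})"
      by (intro image_eqI[of _ _ "(\<beta>, \<lambda>i. \<alpha> i - \<beta> i)"]) auto
  qed
  moreover have "finite ((\<lambda>(\<beta>, \<gamma>). (\<lambda>i. \<beta> i + \<gamma> i)) ` ({\<beta>. f \<beta> \<noteq> \<zero>} \<times> {\<gamma>. g \<gamma> \<noteq> \<zero>}))"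
    using pc_fin[OF f] pc_fin[OF g] by auto
  ultimately have "finite {\<alpha>. ?h \<alpha> \<noteq> \<zero>}" by (rule finite_subset)
  then show ?thesis using val out by (simp add: poly_carrier)
qed

lemma poly_mult_assoc:
  assumes f: "f \<in> carrier (poly_ring R m)" and g: "g \<in> carrier (poly_ring R m)"
    and h: "h \<in> carrier (poly_ring R m)"
  shows "f \<otimes>\<^bsub>poly_ring R m\<^esub> g \<otimes>\<^bsub>poly_ring R m\<^esub> h = f \<otimes>\<^bsub>poly_ring R m\<^esub> (g \<otimes>\<^bsub>poly_ring R m\<^esub> h)"
proof (rule ext)
  fix \<alpha>
  show "(f \<otimes>\<^bsub>poly_ring R m\<^esub> g \<otimes>\<^bsub>poly_ring R m\<^esub> h) \<alpha> = (f \<otimes>\<^bsub>poly_ring R m\<^esub> (g \<otimes>\<^bsub>poly_ring R m\<^esub> h)) \<alpha>"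
  proof (cases "\<alpha> \<in> mons m")
    case False then show ?thesis by (simp add: poly_mult)
  next
    case am: True
    have fc: "\<And>x. f x \<in> carrier R" and gc: "\<And>x. g x \<in> carrier R" and hc: "\<And>x. h x \<in> carrier R"
      using pc_val[OF f] pc_val[OF g] pc_val[OF h] by auto
    define F1 where "F1 = (\<lambda>p. (f (snd p) \<otimes> g (\<lambda>i. fst p i - snd p i)) \<otimes> h (\<lambda>i. \<alpha> i - fst p i))"
    define F2 where "F2 = (\<lambda>q. f (fst q) \<otimes> (g (snd q) \<otimes> h (\<lambda>i. \<alpha> i - fst q i - snd q i)))"
    define S1 where "S1 = Sigma (divs m \<alpha>) (divs m)"
    define S2 where "S2 = Sigma (divs m \<alpha>) (\<lambda>\<gamma>. divs m (\<lambda>i. \<alpha> i - \<gamma> i))"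
    define \<phi> :: "(nat \<Rightarrow> nat) \<times> (nat \<Rightarrow> nat) \<Rightarrow> (nat \<Rightarrow> nat) \<times> (nat \<Rightarrow> nat)" where "\<phi> = (\<lambda>q. ((\<lambda>i. fst q i + snd q i), fst q))"
    have dm: "\<beta> \<in> mons m" if "\<beta> \<in> divs m \<gamma>" for \<beta> \<gamma> using that unfolding divs_def by auto
    have "(f \<otimes>\<^bsub>poly_ring R m\<^esub> g \<otimes>\<^bsub>poly_ring R m\<^esub> h) \<alpha> =
      finsum R (\<lambda>\<beta>. finsum R (\<lambda>\<gamma>. f \<gamma> \<otimes> g (\<lambda>i. \<beta> i - \<gamma> i)) (divs m \<beta>) \<otimes> h (\<lambda>i. \<alpha> i - \<beta> i)) (divs m \<alpha>)"
      unfolding poly_mult using am by (simp, intro finsum_cong') (auto simp: dm fc gc hc intro!: finsum_closed)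
    also have "\<dots> = finsum R (\<lambda>\<beta>. finsum R (\<lambda>\<gamma>. F1 (\<beta>, \<gamma>)) (divs m \<beta>)) (divs m \<alpha>)"
    proof (rule finsum_cong')
      show "(\<lambda>\<beta>. finsum R (\<lambda>\<gamma>. F1 (\<beta>, \<gamma>)) (divs m \<beta>)) \<in> divs m \<alpha> \<rightarrow> carrier R"
        by (auto simp: F1_def fc gc hc intro!: finsum_closed)
      fix \<beta> assume "\<beta> \<in> divs m \<alpha>"
      show "finsum R (\<lambda>\<gamma>. f \<gamma> \<otimes> g (\<lambda>i. \<beta> i - \<gamma> i)) (divs m \<beta>) \<otimes> h (\<lambda>i. \<alpha> i - \<beta> i) =
        finsum R (\<lambda>\<gamma>. F1 (\<beta>, \<gamma>)) (divs m \<beta>)"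
        unfolding F1_def by (subst finsum_ldistr) (auto simp: fc gc hc divs_finite)
    qed simp
    also have "\<dots> = finsum R F1 S1"
      unfolding S1_def by (subst finsum_Sigma) (auto simp: divs_finite F1_def fc gc hc)
    also have "S1 = \<phi> ` S2"
    proof
      show "\<phi> ` S2 \<subseteq> S1"
      proof
        fix p assume "p \<in> \<phi> ` S2"
        then obtain \<gamma> \<delta> where gd: "p = \<phi> (\<gamma>, \<delta>)" "\<gamma> \<in> divs m \<alpha>" "\<delta> \<in> divs m (\<lambda>i. \<alpha> i - \<gamma> i)"
          unfolding S2_def by auto
        have le: "\<gamma> i + \<delta> i \<le> \<alpha> i" for i
          using gd(2,3) unfolding divs_def by (auto dest!: spec[of _ i])
        then show "p \<in> S1" using gd unfolding S1_def \<phi>_def divs_def mons_def by auto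
      qed
      show "S1 \<subseteq> \<phi> ` S2"
      proof
        fix p assume "p \<in> S1"
        then obtain \<beta> \<gamma> where p: "p = (\<beta>, \<gamma>)" "\<beta> \<in> divs m \<alpha>" "\<gamma> \<in> divs m \<beta>"
          unfolding S1_def by auto
        then have "p = \<phi> (\<gamma>, \<lambda>i. \<beta> i - \<gamma> i)" unfolding \<phi>_def divs_def by (auto simp: fun_eq_iff)
        moreover have "(\<gamma>, \<lambda>i. \<beta> i - \<gamma> i) \<in> S2"
          using p unfolding S2_def divs_def mons_def by (auto intro: le_trans diff_le_mono)
        ultimately show "p \<in> \<phi> ` S2" by blast
      qed
    qed
    also have "finsum R F1 (\<phi> ` S2) = finsum R (\<lambda>q. F1 (\<phi> q)) S2"
      by (rule finsum_reindex) (auto simp: F1_def fc gc hc \<phi>_def inj_on_def fun_eq_iff)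
    also have "\<dots> = finsum R F2 S2"
    proof (rule finsum_cong')
      show "S2 = S2" ..
      show "F2 \<in> S2 \<rightarrow> carrier R" by (auto simp: F2_def fc gc hc)
      fix q assume "q \<in> S2"
      have e1: "(\<lambda>i. fst q i + snd q i - fst q i) = snd q" by auto
      have e2: "(\<lambda>i. \<alpha> i - (fst q i + snd q i)) = (\<lambda>i. \<alpha> i - fst q i - snd q i)" by auto
      have "F1 (\<phi> q) = (f (fst q) \<otimes> g (snd q)) \<otimes> h (\<lambda>i. \<alpha> i - (fst q i + snd q i))"
        unfolding F1_def \<phi>_def by (simp only: prod.sel e1)
      also have "\<dots> = F2 q" by (simp only: F2_def e2 m_assoc[OF fc gc hc])
      finally show "F1 (\<phi> q) = F2 q" .
    qed
    also have "\<dots> = finsum R (\<lambda>\<gamma>. finsum R (\<lambda>\<delta>. F2 (\<gamma>, \<delta>)) (divs m (\<lambda>i. \<alpha> i - \<gamma> i))) (divs m \<alpha>)"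
      unfolding S2_def by (subst finsum_Sigma) (auto simp: divs_finite F2_def fc gc hc)
    also have "\<dots> = finsum R (\<lambda>\<gamma>. f \<gamma> \<otimes> finsum R (\<lambda>\<delta>. g \<delta> \<otimes> h (\<lambda>i. \<alpha> i - \<gamma> i - \<delta> i)) (divs m (\<lambda>i. \<alpha> i - \<gamma> i))) (divs m \<alpha>)"
    proof (rule finsum_cong')
      show "(\<lambda>\<gamma>. f \<gamma> \<otimes> finsum R (\<lambda>\<delta>. g \<delta> \<otimes> h (\<lambda>i. \<alpha> i - \<gamma> i - \<delta> i)) (divs m (\<lambda>i. \<alpha> i - \<gamma> i))) \<in> divs m \<alpha> \<rightarrow> carrier R"
        by (auto simp: fc gc hc intro!: finsum_closed)
      fix \<gamma> assume "\<gamma> \<in> divs m \<alpha>"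
      show "finsum R (\<lambda>\<delta>. F2 (\<gamma>, \<delta>)) (divs m (\<lambda>i. \<alpha> i - \<gamma> i)) =
        f \<gamma> \<otimes> finsum R (\<lambda>\<delta>. g \<delta> \<otimes> h (\<lambda>i. \<alpha> i - \<gamma> i - \<delta> i)) (divs m (\<lambda>i. \<alpha> i - \<gamma> i))"
        unfolding F2_def by (subst finsum_rdistr) (auto simp: fc gc hc divs_finite)
    qed simp
    also have "\<dots> = (f \<otimes>\<^bsub>poly_ring R m\<^esub> (g \<otimes>\<^bsub>poly_ring R m\<^esub> h)) \<alpha>"
      unfolding poly_mult using am by (simp add: mons_sub)
    finally show ?thesis .
  qed
qed


lemma poly_mult_comm:
  assumes f: "f \<in> carrier (poly_ring R m)" and g: "g \<in> carrier (poly_ring R m)"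
  shows "f \<otimes>\<^bsub>poly_ring R m\<^esub> g = g \<otimes>\<^bsub>poly_ring R m\<^esub> f"
proof (rule ext)
  fix \<alpha>
  show "(f \<otimes>\<^bsub>poly_ring R m\<^esub> g) \<alpha> = (g \<otimes>\<^bsub>poly_ring R m\<^esub> f) \<alpha>"
  proof (cases "\<alpha> \<in> mons m")
    case False then show ?thesis by (simp add: poly_mult)
  next
    case am: True
    have fc: "\<And>x. f x \<in> carrier R" and gc: "\<And>x. g x \<in> carrier R"
      using pc_val[OF f] pc_val[OF g] by auto
    define \<psi> :: "(nat \<Rightarrow> nat) \<Rightarrow> (nat \<Rightarrow> nat)" where "\<psi> = (\<lambda>\<beta> i. \<alpha> i - \<beta> i)"
    have inj: "inj_on \<psi> (divs m \<alpha>)"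
    proof (rule inj_onI)
      fix x y assume "x \<in> divs m \<alpha>" "y \<in> divs m \<alpha>" "\<psi> x = \<psi> y"
      then show "x = y" unfolding \<psi>_def divs_def
        by (auto simp: fun_eq_iff) (metis diff_diff_cancel)
    qed
    have im: "\<psi> ` divs m \<alpha> = divs m \<alpha>"
    proof
      show "\<psi> ` divs m \<alpha> \<subseteq> divs m \<alpha>" using am unfolding \<psi>_def by (auto simp: divs_iff)
      show "divs m \<alpha> \<subseteq> \<psi> ` divs m \<alpha>"
      proof
        fix \<beta> assume b: "\<beta> \<in> divs m \<alpha>"
        then have "\<beta> = \<psi> (\<psi> \<beta>)" unfolding \<psi>_def divs_def by (auto simp: fun_eq_iff)
        moreover have "\<psi> \<beta> \<in> divs m \<alpha>" using am unfolding \<psi>_def by (auto simp: divs_iff)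
        ultimately show "\<beta> \<in> \<psi> ` divs m \<alpha>" by blast
      qed
    qed
    have "(g \<otimes>\<^bsub>poly_ring R m\<^esub> f) \<alpha> = finsum R (\<lambda>\<beta>. g \<beta> \<otimes> f (\<psi> \<beta>)) (divs m \<alpha>)"
      using am unfolding poly_mult \<psi>_def by simp
    also have "\<dots> = finsum R (\<lambda>\<beta>. g \<beta> \<otimes> f (\<psi> \<beta>)) (\<psi> ` divs m \<alpha>)" by (simp only: im)
    also have "\<dots> = finsum R (\<lambda>\<beta>. g (\<psi> \<beta>) \<otimes> f (\<psi> (\<psi> \<beta>))) (divs m \<alpha>)"
      by (rule finsum_reindex) (auto simp: fc gc inj)
    also have "\<dots> = finsum R (\<lambda>\<beta>. f \<beta> \<otimes> g (\<psi> \<beta>)) (divs m \<alpha>)"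
    proof (rule finsum_cong')
      fix \<beta> assume "\<beta> \<in> divs m \<alpha>"
      then have "\<psi> (\<psi> \<beta>) = \<beta>" unfolding \<psi>_def divs_def by (auto simp: fun_eq_iff)
      then show "g (\<psi> \<beta>) \<otimes> f (\<psi> (\<psi> \<beta>)) = f \<beta> \<otimes> g (\<psi> \<beta>)" using fc gc m_comm by simp
    qed (auto simp: fc gc)
    also have "\<dots> = (f \<otimes>\<^bsub>poly_ring R m\<^esub> g) \<alpha>"
      using am unfolding poly_mult \<psi>_def by simp
    finally show ?thesis by simp
  qed
qed

lemma poly_one_closed: "\<one>\<^bsub>poly_ring R m\<^esub> \<in> carrier (poly_ring R m)"
proof -
  have "{\<alpha>. (if \<alpha> = (\<lambda>_. 0) then \<one> else \<zero>) \<noteq> \<zero>} \<subseteq> {\<lambda>_. 0}" by auto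
  then have "finite {\<alpha>. (if \<alpha> = (\<lambda>_. 0) then \<one> else \<zero>) \<noteq> \<zero>}" by (rule finite_subset) simp
  then show ?thesis unfolding poly_one poly_carrier using mons_zero by auto
qed

lemma poly_one_l:
  assumes g: "g \<in> carrier (poly_ring R m)"
  shows "\<one>\<^bsub>poly_ring R m\<^esub> \<otimes>\<^bsub>poly_ring R m\<^esub> g = g"
proof (rule ext)
  fix \<alpha>
  show "(\<one>\<^bsub>poly_ring R m\<^esub> \<otimes>\<^bsub>poly_ring R m\<^esub> g) \<alpha> = g \<alpha>"
  proof (cases "\<alpha> \<in> mons m")
    case False then show ?thesis using pc_out[OF g False] by (simp add: poly_mult)
  next
    case am: True
    have gc: "\<And>x. g x \<in> carrier R" using pc_val[OF g] by auto
    have z: "(\<lambda>_. 0) \<in> divs m \<alpha>" using am mons_zero by (simp add: divs_iff)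
    have "(\<one>\<^bsub>poly_ring R m\<^esub> \<otimes>\<^bsub>poly_ring R m\<^esub> g) \<alpha> =
       finsum R (\<lambda>\<beta>. (if \<beta> = (\<lambda>_. 0) then \<one> else \<zero>) \<otimes> g (\<lambda>i. \<alpha> i - \<beta> i)) (divs m \<alpha>)"
      using am unfolding poly_mult poly_one by simp
    also have "\<dots> = finsum R (\<lambda>\<beta>. if (\<lambda>_. 0) = \<beta> then g (\<lambda>i. \<alpha> i - \<beta> i) else \<zero>) (divs m \<alpha>)"
      by (rule finsum_cong') (auto simp: gc)
    also have "\<dots> = g (\<lambda>i. \<alpha> i - 0)"
      by (rule finsum_singleton[OF z divs_finite]) (auto simp: gc)
    finally show ?thesis by simp
  qed
qed

lemma poly_l_distr:
  assumes f: "f \<in> carrier (poly_ring R m)" and g: "g \<in> carrier (poly_ring R m)"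
    and h: "h \<in> carrier (poly_ring R m)"
  shows "(f \<oplus>\<^bsub>poly_ring R m\<^esub> g) \<otimes>\<^bsub>poly_ring R m\<^esub> h =
    f \<otimes>\<^bsub>poly_ring R m\<^esub> h \<oplus>\<^bsub>poly_ring R m\<^esub> g \<otimes>\<^bsub>poly_ring R m\<^esub> h"
proof (rule ext)
  fix \<alpha>
  have fc: "\<And>x. f x \<in> carrier R" and gc: "\<And>x. g x \<in> carrier R" and hc: "\<And>x. h x \<in> carrier R"
    using pc_val[OF f] pc_val[OF g] pc_val[OF h] by auto
  show "((f \<oplus>\<^bsub>poly_ring R m\<^esub> g) \<otimes>\<^bsub>poly_ring R m\<^esub> h) \<alpha> =
    (f \<otimes>\<^bsub>poly_ring R m\<^esub> h \<oplus>\<^bsub>poly_ring R m\<^esub> g \<otimes>\<^bsub>poly_ring R m\<^esub> h) \<alpha>"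
  proof (cases "\<alpha> \<in> mons m")
    case False then show ?thesis by (simp add: poly_mult poly_add)
  next
    case am: True
    have "((f \<oplus>\<^bsub>poly_ring R m\<^esub> g) \<otimes>\<^bsub>poly_ring R m\<^esub> h) \<alpha> =
      finsum R (\<lambda>\<beta>. f \<beta> \<otimes> h (\<lambda>i. \<alpha> i - \<beta> i) \<oplus> g \<beta> \<otimes> h (\<lambda>i. \<alpha> i - \<beta> i)) (divs m \<alpha>)"
      using am unfolding poly_mult poly_add by (simp add: l_distr fc gc hc)
    also have "\<dots> = finsum R (\<lambda>\<beta>. f \<beta> \<otimes> h (\<lambda>i. \<alpha> i - \<beta> i)) (divs m \<alpha>) \<oplus>
        finsum R (\<lambda>\<beta>. g \<beta> \<otimes> h (\<lambda>i. \<alpha> i - \<beta> i)) (divs m \<alpha>)"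
      by (rule finsum_addf) (auto simp: fc gc hc)
    also have "\<dots> = (f \<otimes>\<^bsub>poly_ring R m\<^esub> h \<oplus>\<^bsub>poly_ring R m\<^esub> g \<otimes>\<^bsub>poly_ring R m\<^esub> h) \<alpha>"
      using am unfolding poly_mult poly_add by simp
    finally show ?thesis .
  qed
qed

lemma poly_add_closed:
  assumes f: "f \<in> carrier (poly_ring R m)" and g: "g \<in> carrier (poly_ring R m)"
  shows "f \<oplus>\<^bsub>poly_ring R m\<^esub> g \<in> carrier (poly_ring R m)"
proof -
  have "{\<alpha>. f \<alpha> \<oplus> g \<alpha> \<noteq> \<zero>} \<subseteq> {\<alpha>. f \<alpha> \<noteq> \<zero>} \<union> {\<alpha>. g \<alpha> \<noteq> \<zero>}" by auto
  then have "finite {\<alpha>. f \<alpha> \<oplus> g \<alpha> \<noteq> \<zero>}" using pc_fin[OF f] pc_fin[OF g] by (simp add: finite_subset)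
  then show ?thesis using pc_val[OF f] pc_val[OF g] pc_out[OF f] pc_out[OF g]
    unfolding poly_add by (simp add: poly_carrier)
qed

lemma poly_zero_closed: "\<zero>\<^bsub>poly_ring R m\<^esub> \<in> carrier (poly_ring R m)"
  unfolding poly_zero poly_carrier by simp

lemma poly_cring: "cring (poly_ring R m)"
proof (rule cringI)
  show "abelian_group (poly_ring R m)"
  proof (rule abelian_groupI)
    fix x y assume "x \<in> carrier (poly_ring R m)" "y \<in> carrier (poly_ring R m)"
    then show "x \<oplus>\<^bsub>poly_ring R m\<^esub> y \<in> carrier (poly_ring R m)" by (rule poly_add_closed)
  next
    show "\<zero>\<^bsub>poly_ring R m\<^esub> \<in> carrier (poly_ring R m)" by (rule poly_zero_closed)
  next
    fix x y z assume a: "x \<in> carrier (poly_ring R m)" "y \<in> carrier (poly_ring R m)" "z \<in> carrier (poly_ring R m)"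
    then show "x \<oplus>\<^bsub>poly_ring R m\<^esub> y \<oplus>\<^bsub>poly_ring R m\<^esub> z = x \<oplus>\<^bsub>poly_ring R m\<^esub> (y \<oplus>\<^bsub>poly_ring R m\<^esub> z)"
      using pc_val[OF a(1)] pc_val[OF a(2)] pc_val[OF a(3)] by (simp add: poly_add a_assoc)
  next
    fix x y assume a: "x \<in> carrier (poly_ring R m)" "y \<in> carrier (poly_ring R m)"
    then show "x \<oplus>\<^bsub>poly_ring R m\<^esub> y = y \<oplus>\<^bsub>poly_ring R m\<^esub> x"
      using pc_val[OF a(1)] pc_val[OF a(2)] by (simp add: poly_add a_comm)
  next
    fix x assume a: "x \<in> carrier (poly_ring R m)"
    then show "\<zero>\<^bsub>poly_ring R m\<^esub> \<oplus>\<^bsub>poly_ring R m\<^esub> x = x"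
      using pc_val[OF a] by (simp add: poly_add poly_zero)
  next
    fix x assume a: "x \<in> carrier (poly_ring R m)"
    have xc: "\<And>\<alpha>. x \<alpha> \<in> carrier R" using pc_val[OF a] by auto
    have "{\<alpha>. \<ominus> x \<alpha> \<noteq> \<zero>} \<subseteq> {\<alpha>. x \<alpha> \<noteq> \<zero>}" by auto
    then have "finite {\<alpha>. \<ominus> x \<alpha> \<noteq> \<zero>}" using pc_fin[OF a] by (simp add: finite_subset)
    then have "(\<lambda>\<alpha>. \<ominus> x \<alpha>) \<in> carrier (poly_ring R m)"
      using xc pc_out[OF a] by (simp add: poly_carrier)
    moreover have "(\<lambda>\<alpha>. \<ominus> x \<alpha>) \<oplus>\<^bsub>poly_ring R m\<^esub> x = \<zero>\<^bsub>poly_ring R m\<^esub>"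
      using xc by (simp add: poly_add poly_zero l_neg)
    ultimately show "\<exists>y\<in>carrier (poly_ring R m). y \<oplus>\<^bsub>poly_ring R m\<^esub> x = \<zero>\<^bsub>poly_ring R m\<^esub>" by blast
  qed
next
  show "comm_monoid (poly_ring R m)"
  proof (rule comm_monoidI)
    fix x y assume "x \<in> carrier (poly_ring R m)" "y \<in> carrier (poly_ring R m)"
    then show "x \<otimes>\<^bsub>poly_ring R m\<^esub> y \<in> carrier (poly_ring R m)" by (rule poly_mult_closed)
  next
    show "\<one>\<^bsub>poly_ring R m\<^esub> \<in> carrier (poly_ring R m)" by (rule poly_one_closed)
  next
    fix x y z assume "x \<in> carrier (poly_ring R m)" "y \<in> carrier (poly_ring R m)" "z \<in> carrier (poly_ring R m)"
    then show "x \<otimes>\<^bsub>poly_ring R m\<^esub> y \<otimes>\<^bsub>poly_ring R m\<^esub> z = x \<otimes>\<^bsub>poly_ring R m\<^esub> (y \<otimes>\<^bsub>poly_ring R m\<^esub> z)"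
      by (rule poly_mult_assoc)
  next
    fix x assume "x \<in> carrier (poly_ring R m)"
    then show "\<one>\<^bsub>poly_ring R m\<^esub> \<otimes>\<^bsub>poly_ring R m\<^esub> x = x" by (rule poly_one_l)
  next
    fix x y assume "x \<in> carrier (poly_ring R m)" "y \<in> carrier (poly_ring R m)"
    then show "x \<otimes>\<^bsub>poly_ring R m\<^esub> y = y \<otimes>\<^bsub>poly_ring R m\<^esub> x" by (rule poly_mult_comm)
  qed
next
  fix x y z assume "x \<in> carrier (poly_ring R m)" "y \<in> carrier (poly_ring R m)" "z \<in> carrier (poly_ring R m)"
  then show "(x \<oplus>\<^bsub>poly_ring R m\<^esub> y) \<otimes>\<^bsub>poly_ring R m\<^esub> z =
    x \<otimes>\<^bsub>poly_ring R m\<^esub> z \<oplus>\<^bsub>poly_ring R m\<^esub> y \<otimes>\<^bsub>poly_ring R m\<^esub> z"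
    by (rule poly_l_distr)
qed

lemma poly_ideal:
  assumes J: "ideal J R"
  shows "ideal {f \<in> carrier (poly_ring R m). \<forall>\<alpha>. f \<alpha> \<in> J} (poly_ring R m)"
proof (rule cring.ideal_crit[OF poly_cring])
  have Jz: "\<zero> \<in> J" using additive_subgroup.zero_closed[OF ideal.axioms(1)[OF J]] .
  have Ja: "a \<oplus> b \<in> J" if "a \<in> J" "b \<in> J" for a b
    using additive_subgroup.a_closed[OF ideal.axioms(1)[OF J]] that .
  show "{f \<in> carrier (poly_ring R m). \<forall>\<alpha>. f \<alpha> \<in> J} \<subseteq> carrier (poly_ring R m)" by auto
  show "\<zero>\<^bsub>poly_ring R m\<^esub> \<in> {f \<in> carrier (poly_ring R m). \<forall>\<alpha>. f \<alpha> \<in> J}"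
    using poly_zero_closed Jz by (simp add: poly_zero)
  fix a b assume a: "a \<in> {f \<in> carrier (poly_ring R m). \<forall>\<alpha>. f \<alpha> \<in> J}"
  {
    assume b: "b \<in> {f \<in> carrier (poly_ring R m). \<forall>\<alpha>. f \<alpha> \<in> J}"
    show "a \<oplus>\<^bsub>poly_ring R m\<^esub> b \<in> {f \<in> carrier (poly_ring R m). \<forall>\<alpha>. f \<alpha> \<in> J}"
      using a b poly_add_closed Ja by (simp add: poly_add)
  }
  {
    assume x: "b \<in> carrier (poly_ring R m)"
    have "(b \<otimes>\<^bsub>poly_ring R m\<^esub> a) \<alpha> \<in> J" for \<alpha>
    proof (cases "\<alpha> \<in> mons m")
      case False then show ?thesis using Jz by (simp add: poly_mult)
    next
      case True
      have "finsum R (\<lambda>\<beta>. b \<beta> \<otimes> a (\<lambda>i. \<alpha> i - \<beta> i)) (divs m \<alpha>) \<in> J"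
        using a pc_val[OF x] by (intro ideal_finsum[OF J divs_finite] ideal.I_l_closed[OF J]) auto
      then show ?thesis using True by (simp add: poly_mult)
    qed
    then show "b \<otimes>\<^bsub>poly_ring R m\<^esub> a \<in> {f \<in> carrier (poly_ring R m). \<forall>\<alpha>. f \<alpha> \<in> J}"
      using a x poly_mult_closed by auto
  }
qed

lemma const_poly_closed: "c \<in> carrier R \<Longrightarrow> const_poly R c \<in> carrier (poly_ring R m)"
proof -
  assume c: "c \<in> carrier R"
  have "{\<alpha>. const_poly R c \<alpha> \<noteq> \<zero>} \<subseteq> {\<lambda>_. 0}" unfolding const_poly_def by auto
  then have "finite {\<alpha>. const_poly R c \<alpha> \<noteq> \<zero>}" by (rule finite_subset) simp
  then show ?thesis using c mons_zero unfolding poly_carrier const_poly_def by auto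
qed

end

lemma (in abelian_group) minus_zero_iff:
  assumes "x \<in> carrier G" "y \<in> carrier G" shows "x \<ominus> y = \<zero> \<longleftrightarrow> x = y"
proof
  assume h: "x \<ominus> y = \<zero>"
  have "x = x \<oplus> (\<ominus> y \<oplus> y)" using assms by (simp add: l_neg)
  also have "\<dots> = (x \<ominus> y) \<oplus> y" using assms by (simp add: minus_eq a_assoc)
  also have "\<dots> = y" using h assms by simp
  finally show "x = y" .
next
  assume "x = y" then show "x \<ominus> y = \<zero>" using assms by (simp add: minus_eq r_neg)
qed

locale lm = lp I R + module R M for I :: "'a set" and R :: "'a ring" (structure) and M :: "('a, 'b) module" (structure)

context lm
begin

abbreviation "mlr \<equiv> loc_mod_rel R M Sc"
abbreviation "mcls m s \<equiv> mlr `` {(m, s)}"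

lemma mrel_iff: "((m, s), (n, t)) \<in> mlr \<longleftrightarrow>
   m \<in> carrier M \<and> s \<in> Sc \<and> n \<in> carrier M \<and> t \<in> Sc \<and>
   (\<exists>u \<in> Sc. u \<odot>\<^bsub>M\<^esub> (t \<odot>\<^bsub>M\<^esub> m) = u \<odot>\<^bsub>M\<^esub> (s \<odot>\<^bsub>M\<^esub> n))"
proof -
  have "u \<odot>\<^bsub>M\<^esub> (t \<odot>\<^bsub>M\<^esub> m \<ominus>\<^bsub>M\<^esub> s \<odot>\<^bsub>M\<^esub> n) = \<zero>\<^bsub>M\<^esub> \<longleftrightarrow> u \<odot>\<^bsub>M\<^esub> (t \<odot>\<^bsub>M\<^esub> m) = u \<odot>\<^bsub>M\<^esub> (s \<odot>\<^bsub>M\<^esub> n)"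
    if "m \<in> carrier M" "n \<in> carrier M" "s \<in> carrier R" "t \<in> carrier R" "u \<in> carrier R" for u m n s t
  proof -
    have "u \<odot>\<^bsub>M\<^esub> (t \<odot>\<^bsub>M\<^esub> m \<ominus>\<^bsub>M\<^esub> s \<odot>\<^bsub>M\<^esub> n) = u \<odot>\<^bsub>M\<^esub> (t \<odot>\<^bsub>M\<^esub> m) \<ominus>\<^bsub>M\<^esub> u \<odot>\<^bsub>M\<^esub> (s \<odot>\<^bsub>M\<^esub> n)"
      using that by (simp add: M.minus_eq smult_r_distr smult_r_minus)
    thus ?thesis using that by (simp add: M.minus_zero_iff)
  qed
  note key = this
  have mem: "((m, s), (n, t)) \<in> mlr \<longleftrightarrow> m \<in> carrier M \<and> s \<in> Sc \<and> n \<in> carrier M \<and> t \<in> Sc \<and>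
     (\<exists>u \<in> Sc. u \<odot>\<^bsub>M\<^esub> (t \<odot>\<^bsub>M\<^esub> m \<ominus>\<^bsub>M\<^esub> s \<odot>\<^bsub>M\<^esub> n) = \<zero>\<^bsub>M\<^esub>)"
    unfolding loc_mod_rel_def by (simp only: mem_Collect_eq case_prod_conv)
  show ?thesis
  proof
    assume "((m, s), (n, t)) \<in> mlr"
    then obtain u where "m \<in> carrier M" "s \<in> Sc" "n \<in> carrier M" "t \<in> Sc" "u \<in> Sc"
      "u \<odot>\<^bsub>M\<^esub> (t \<odot>\<^bsub>M\<^esub> m \<ominus>\<^bsub>M\<^esub> s \<odot>\<^bsub>M\<^esub> n) = \<zero>\<^bsub>M\<^esub>"
      unfolding mem by blast
    with key[of m n s t u] show "m \<in> carrier M \<and> s \<in> Sc \<and> n \<in> carrier M \<and> t \<in> Sc \<and>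
      (\<exists>u \<in> Sc. u \<odot>\<^bsub>M\<^esub> (t \<odot>\<^bsub>M\<^esub> m) = u \<odot>\<^bsub>M\<^esub> (s \<odot>\<^bsub>M\<^esub> n))" by blast
  next
    assume "m \<in> carrier M \<and> s \<in> Sc \<and> n \<in> carrier M \<and> t \<in> Sc \<and>
      (\<exists>u \<in> Sc. u \<odot>\<^bsub>M\<^esub> (t \<odot>\<^bsub>M\<^esub> m) = u \<odot>\<^bsub>M\<^esub> (s \<odot>\<^bsub>M\<^esub> n))"
    then obtain u where "m \<in> carrier M" "s \<in> Sc" "n \<in> carrier M" "t \<in> Sc" "u \<in> Sc"
      "u \<odot>\<^bsub>M\<^esub> (t \<odot>\<^bsub>M\<^esub> m) = u \<odot>\<^bsub>M\<^esub> (s \<odot>\<^bsub>M\<^esub> n)" by blast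
    with key[of m n s t u] show "((m, s), (n, t)) \<in> mlr" unfolding mem by blast
  qed
qed

lemma equiv_mlr: "equiv (carrier M \<times> Sc) mlr"
proof (rule equivI)
  show "mlr \<subseteq> (carrier M \<times> Sc) \<times> (carrier M \<times> Sc)"
    unfolding loc_mod_rel_def by blast
  show "refl_on (carrier M \<times> Sc) mlr"
    unfolding refl_on_def
  proof
    fix x assume "x \<in> carrier M \<times> Sc"
    then show "(x, x) \<in> mlr" using S_one by (cases x) (auto simp: mrel_iff)
  qed
  show "sym mlr"
    unfolding sym_def
  proof (intro allI impI)
    fix x y assume "(x, y) \<in> mlr"
    then show "(y, x) \<in> mlr" by (cases x, cases y) (simp add: mrel_iff, metis)
  qed
  show "trans mlr"
    unfolding trans_def
  proof (intro allI impI)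
    fix x y z assume xy: "(x, y) \<in> mlr" and yz: "(y, z) \<in> mlr"
    obtain a s where x: "x = (a, s)" by (cases x)
    obtain b t where y: "y = (b, t)" by (cases y)
    obtain c w where z: "z = (c, w)" by (cases z)
    from xy obtain u where u: "u \<in> Sc" "u \<odot>\<^bsub>M\<^esub> (t \<odot>\<^bsub>M\<^esub> a) = u \<odot>\<^bsub>M\<^esub> (s \<odot>\<^bsub>M\<^esub> b)"
      and c1: "a \<in> carrier M" "s \<in> Sc" "b \<in> carrier M" "t \<in> Sc"
      unfolding x y mrel_iff by blast
    from yz obtain v where v: "v \<in> Sc" "v \<odot>\<^bsub>M\<^esub> (w \<odot>\<^bsub>M\<^esub> b) = v \<odot>\<^bsub>M\<^esub> (t \<odot>\<^bsub>M\<^esub> c)"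
      and c2: "c \<in> carrier M" "w \<in> Sc"
      unfolding y z mrel_iff by blast
    have cs: "a \<in> carrier M" "b \<in> carrier M" "c \<in> carrier M" "s \<in> carrier R" "t \<in> carrier R"
      "w \<in> carrier R" "u \<in> carrier R" "v \<in> carrier R" using c1 c2 u v by auto
    have "(u \<otimes> v \<otimes> t) \<odot>\<^bsub>M\<^esub> (w \<odot>\<^bsub>M\<^esub> a) = (v \<otimes> w) \<odot>\<^bsub>M\<^esub> (u \<odot>\<^bsub>M\<^esub> (t \<odot>\<^bsub>M\<^esub> a))"
      using cs by (simp add: smult_assoc1[symmetric] m_ac)
    also have "\<dots> = (v \<otimes> w) \<odot>\<^bsub>M\<^esub> (u \<odot>\<^bsub>M\<^esub> (s \<odot>\<^bsub>M\<^esub> b))" using u by simp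
    also have "\<dots> = (u \<otimes> s) \<odot>\<^bsub>M\<^esub> (v \<odot>\<^bsub>M\<^esub> (w \<odot>\<^bsub>M\<^esub> b))"
      using cs by (simp add: smult_assoc1[symmetric] m_ac)
    also have "\<dots> = (u \<otimes> s) \<odot>\<^bsub>M\<^esub> (v \<odot>\<^bsub>M\<^esub> (t \<odot>\<^bsub>M\<^esub> c))" using v by simp
    also have "\<dots> = (u \<otimes> v \<otimes> t) \<odot>\<^bsub>M\<^esub> (s \<odot>\<^bsub>M\<^esub> c)"
      using cs by (simp add: smult_assoc1[symmetric] m_ac)
    finally have "(u \<otimes> v \<otimes> t) \<odot>\<^bsub>M\<^esub> (w \<odot>\<^bsub>M\<^esub> a) = (u \<otimes> v \<otimes> t) \<odot>\<^bsub>M\<^esub> (s \<odot>\<^bsub>M\<^esub> c)" .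
    moreover have "u \<otimes> v \<otimes> t \<in> Sc" using S_mult u v c1 by auto
    ultimately show "(x, z) \<in> mlr" unfolding x z mrel_iff using c1 c2 by blast
  qed
qed

lemma mcls_eq: "m \<in> carrier M \<Longrightarrow> s \<in> Sc \<Longrightarrow> n \<in> carrier M \<Longrightarrow> t \<in> Sc \<Longrightarrow>
  mcls m s = mcls n t \<longleftrightarrow> (\<exists>u \<in> Sc. u \<odot>\<^bsub>M\<^esub> (t \<odot>\<^bsub>M\<^esub> m) = u \<odot>\<^bsub>M\<^esub> (s \<odot>\<^bsub>M\<^esub> n))"
  by (subst eq_equiv_class_iff[OF equiv_mlr]) (auto simp: mrel_iff)

lemma mcls_eqI: "m \<in> carrier M \<Longrightarrow> s \<in> Sc \<Longrightarrow> n \<in> carrier M \<Longrightarrow> t \<in> Sc \<Longrightarrow>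
  t \<odot>\<^bsub>M\<^esub> m = s \<odot>\<^bsub>M\<^esub> n \<Longrightarrow> mcls m s = mcls n t"
  using mcls_eq S_one by force

lemma mcls_mem: "m \<in> carrier M \<Longrightarrow> s \<in> Sc \<Longrightarrow> (m, s) \<in> mcls m s"
  using equiv_class_self[OF equiv_mlr, of "(m, s)"] by simp

lemma madd_compat:
  assumes "((a, s), (a', s')) \<in> mlr" "((b, t), (b', t')) \<in> mlr"
  shows "((t \<odot>\<^bsub>M\<^esub> a \<oplus>\<^bsub>M\<^esub> s \<odot>\<^bsub>M\<^esub> b, s \<otimes> t), (t' \<odot>\<^bsub>M\<^esub> a' \<oplus>\<^bsub>M\<^esub> s' \<odot>\<^bsub>M\<^esub> b', s' \<otimes> t')) \<in> mlr"
proof -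
  from assms(1) obtain u where u: "u \<in> Sc" "u \<odot>\<^bsub>M\<^esub> (s' \<odot>\<^bsub>M\<^esub> a) = u \<odot>\<^bsub>M\<^esub> (s \<odot>\<^bsub>M\<^esub> a')"
    and c1: "a \<in> carrier M" "s \<in> Sc" "a' \<in> carrier M" "s' \<in> Sc" unfolding mrel_iff by blast
  from assms(2) obtain v where v: "v \<in> Sc" "v \<odot>\<^bsub>M\<^esub> (t' \<odot>\<^bsub>M\<^esub> b) = v \<odot>\<^bsub>M\<^esub> (t \<odot>\<^bsub>M\<^esub> b')"
    and c2: "b \<in> carrier M" "t \<in> Sc" "b' \<in> carrier M" "t' \<in> Sc" unfolding mrel_iff by blast
  have cs: "a \<in> carrier M" "b \<in> carrier M" "a' \<in> carrier M" "b' \<in> carrier M" "s \<in> carrier R" "t \<in> carrier R"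
      "s' \<in> carrier R" "t' \<in> carrier R" "u \<in> carrier R" "v \<in> carrier R" using c1 c2 u v by auto
  have "(u \<otimes> v) \<odot>\<^bsub>M\<^esub> ((s' \<otimes> t') \<odot>\<^bsub>M\<^esub> (t \<odot>\<^bsub>M\<^esub> a \<oplus>\<^bsub>M\<^esub> s \<odot>\<^bsub>M\<^esub> b)) =
      (v \<otimes> t' \<otimes> t) \<odot>\<^bsub>M\<^esub> (u \<odot>\<^bsub>M\<^esub> (s' \<odot>\<^bsub>M\<^esub> a)) \<oplus>\<^bsub>M\<^esub> (u \<otimes> s' \<otimes> s) \<odot>\<^bsub>M\<^esub> (v \<odot>\<^bsub>M\<^esub> (t' \<odot>\<^bsub>M\<^esub> b))"
    using cs by (simp add: smult_r_distr smult_assoc1[symmetric] m_ac)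
  also have "\<dots> = (v \<otimes> t' \<otimes> t) \<odot>\<^bsub>M\<^esub> (u \<odot>\<^bsub>M\<^esub> (s \<odot>\<^bsub>M\<^esub> a')) \<oplus>\<^bsub>M\<^esub> (u \<otimes> s' \<otimes> s) \<odot>\<^bsub>M\<^esub> (v \<odot>\<^bsub>M\<^esub> (t \<odot>\<^bsub>M\<^esub> b'))"
    using u v by simp
  also have "\<dots> = (u \<otimes> v) \<odot>\<^bsub>M\<^esub> ((s \<otimes> t) \<odot>\<^bsub>M\<^esub> (t' \<odot>\<^bsub>M\<^esub> a' \<oplus>\<^bsub>M\<^esub> s' \<odot>\<^bsub>M\<^esub> b'))"
    using cs by (simp add: smult_r_distr smult_assoc1[symmetric] m_ac)
  finally show ?thesis unfolding mrel_iff using c1 c2 u v S_mult by auto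
qed

lemma msmult_compat:
  assumes "((a, s), (a', s')) \<in> lr" "((m, t), (m', t')) \<in> mlr"
  shows "((a \<odot>\<^bsub>M\<^esub> m, s \<otimes> t), (a' \<odot>\<^bsub>M\<^esub> m', s' \<otimes> t')) \<in> mlr"
proof -
  from assms(1) obtain u where u: "u \<in> Sc" "u \<otimes> (s' \<otimes> a) = u \<otimes> (s \<otimes> a')"
    and c1: "a \<in> carrier R" "s \<in> Sc" "a' \<in> carrier R" "s' \<in> Sc" unfolding rel_iff by blast
  from assms(2) obtain v where v: "v \<in> Sc" "v \<odot>\<^bsub>M\<^esub> (t' \<odot>\<^bsub>M\<^esub> m) = v \<odot>\<^bsub>M\<^esub> (t \<odot>\<^bsub>M\<^esub> m')"
    and c2: "m \<in> carrier M" "t \<in> Sc" "m' \<in> carrier M" "t' \<in> Sc" unfolding mrel_iff by blast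
  have cs: "a \<in> carrier R" "a' \<in> carrier R" "m \<in> carrier M" "m' \<in> carrier M" "s \<in> carrier R" "t \<in> carrier R"
      "s' \<in> carrier R" "t' \<in> carrier R" "u \<in> carrier R" "v \<in> carrier R" using c1 c2 u v by auto
  have "(u \<otimes> v) \<odot>\<^bsub>M\<^esub> ((s' \<otimes> t') \<odot>\<^bsub>M\<^esub> (a \<odot>\<^bsub>M\<^esub> m)) = (u \<otimes> (s' \<otimes> a)) \<odot>\<^bsub>M\<^esub> (v \<odot>\<^bsub>M\<^esub> (t' \<odot>\<^bsub>M\<^esub> m))"
    using cs by (simp add: smult_assoc1[symmetric] m_ac)
  also have "\<dots> = (u \<otimes> (s \<otimes> a')) \<odot>\<^bsub>M\<^esub> (v \<odot>\<^bsub>M\<^esub> (t \<odot>\<^bsub>M\<^esub> m'))" using u v by simp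
  also have "\<dots> = (u \<otimes> v) \<odot>\<^bsub>M\<^esub> ((s \<otimes> t) \<odot>\<^bsub>M\<^esub> (a' \<odot>\<^bsub>M\<^esub> m'))"
    using cs by (simp add: smult_assoc1[symmetric] m_ac)
  finally show ?thesis unfolding mrel_iff using c1 c2 u v S_mult by auto
qed

lemma lm_carrier: "carrier (loc_mod R M I) = (carrier M \<times> Sc) // mlr"
  unfolding loc_mod_def Let_def by (simp only: partial_object.select_convs)

lemma lm_zero: "\<zero>\<^bsub>loc_mod R M I\<^esub> = mcls \<zero>\<^bsub>M\<^esub> \<one>"
  unfolding loc_mod_def Let_def by (simp only: ring.select_convs)

lemma lm_add_raw: "x \<oplus>\<^bsub>loc_mod R M I\<^esub> y = mlr `` {(t \<odot>\<^bsub>M\<^esub> m \<oplus>\<^bsub>M\<^esub> s \<odot>\<^bsub>M\<^esub> n, s \<otimes>\<^bsub>R\<^esub> t) | m s n t.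
                            (m, s) \<in> x \<and> (n, t) \<in> y}"
  unfolding loc_mod_def Let_def by (simp only: ring.select_convs)

lemma lm_smult_raw: "x \<odot>\<^bsub>loc_mod R M I\<^esub> y = mlr `` {(a \<odot>\<^bsub>M\<^esub> m, s \<otimes>\<^bsub>R\<^esub> t) | a s m t. (a, s) \<in> x \<and> (m, t) \<in> y}"
  unfolding loc_mod_def Let_def by (simp only: module.select_convs)

lemma lm_add:
  assumes "m \<in> carrier M" "s \<in> Sc" "n \<in> carrier M" "t \<in> Sc"
  shows "mcls m s \<oplus>\<^bsub>loc_mod R M I\<^esub> mcls n t = mcls (t \<odot>\<^bsub>M\<^esub> m \<oplus>\<^bsub>M\<^esub> s \<odot>\<^bsub>M\<^esub> n) (s \<otimes> t)"
  unfolding lm_add_raw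
proof (rule equiv_class_of_set[OF equiv_mlr])
  show "(t \<odot>\<^bsub>M\<^esub> m \<oplus>\<^bsub>M\<^esub> s \<odot>\<^bsub>M\<^esub> n, s \<otimes> t) \<in> {(t' \<odot>\<^bsub>M\<^esub> m' \<oplus>\<^bsub>M\<^esub> s' \<odot>\<^bsub>M\<^esub> n', s' \<otimes>\<^bsub>R\<^esub> t') | m' s' n' t'.
                            (m', s') \<in> mcls m s \<and> (n', t') \<in> mcls n t}"
    using mcls_mem[OF assms(1,2)] mcls_mem[OF assms(3,4)] by blast
  fix y assume "y \<in> {(t' \<odot>\<^bsub>M\<^esub> m' \<oplus>\<^bsub>M\<^esub> s' \<odot>\<^bsub>M\<^esub> n', s' \<otimes>\<^bsub>R\<^esub> t') | m' s' n' t'.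
                            (m', s') \<in> mcls m s \<and> (n', t') \<in> mcls n t}"
  then obtain m' s' n' t' where y: "y = (t' \<odot>\<^bsub>M\<^esub> m' \<oplus>\<^bsub>M\<^esub> s' \<odot>\<^bsub>M\<^esub> n', s' \<otimes> t')"
    "((m, s), (m', s')) \<in> mlr" "((n, t), (n', t')) \<in> mlr" unfolding Image_singleton_iff by blast
  show "((t \<odot>\<^bsub>M\<^esub> m \<oplus>\<^bsub>M\<^esub> s \<odot>\<^bsub>M\<^esub> n, s \<otimes> t), y) \<in> mlr"
    unfolding y(1) by (rule madd_compat[OF y(2,3)])
qed

lemma lm_smult:
  assumes "a \<in> carrier R" "s \<in> Sc" "m \<in> carrier M" "t \<in> Sc"
  shows "cls a s \<odot>\<^bsub>loc_mod R M I\<^esub> mcls m t = mcls (a \<odot>\<^bsub>M\<^esub> m) (s \<otimes> t)"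
  unfolding lm_smult_raw
proof (rule equiv_class_of_set[OF equiv_mlr])
  show "(a \<odot>\<^bsub>M\<^esub> m, s \<otimes> t) \<in> {(a' \<odot>\<^bsub>M\<^esub> m', s' \<otimes>\<^bsub>R\<^esub> t') | a' s' m' t'. (a', s') \<in> cls a s \<and> (m', t') \<in> mcls m t}"
    using cls_mem[OF assms(1,2)] mcls_mem[OF assms(3,4)] by blast
  fix y assume "y \<in> {(a' \<odot>\<^bsub>M\<^esub> m', s' \<otimes>\<^bsub>R\<^esub> t') | a' s' m' t'. (a', s') \<in> cls a s \<and> (m', t') \<in> mcls m t}"
  then obtain a' s' m' t' where y: "y = (a' \<odot>\<^bsub>M\<^esub> m', s' \<otimes> t')"
    "((a, s), (a', s')) \<in> lr" "((m, t), (m', t')) \<in> mlr" unfolding Image_singleton_iff by blast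
  show "((a \<odot>\<^bsub>M\<^esub> m, s \<otimes> t), y) \<in> mlr"
    unfolding y(1) by (rule msmult_compat[OF y(2,3)])
qed

lemma lm_elem:
  assumes "U \<in> carrier (loc_mod R M I)"
  obtains m s where "m \<in> carrier M" "s \<in> Sc" "U = mcls m s"
  using assms unfolding lm_carrier by (auto elim!: quotientE)

lemma mcls_in: "m \<in> carrier M \<Longrightarrow> s \<in> Sc \<Longrightarrow> mcls m s \<in> carrier (loc_mod R M I)"
  unfolding lm_carrier by (auto intro: quotientI)

lemma lm_abelian_monoid: "abelian_monoid (loc_mod R M I)"
proof (rule abelian_monoidI)
  fix x y assume "x \<in> carrier (loc_mod R M I)" "y \<in> carrier (loc_mod R M I)"
  then show "x \<oplus>\<^bsub>loc_mod R M I\<^esub> y \<in> carrier (loc_mod R M I)"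
    by (auto elim!: lm_elem simp: lm_add intro!: mcls_in)
next
  show "\<zero>\<^bsub>loc_mod R M I\<^esub> \<in> carrier (loc_mod R M I)" unfolding lm_zero using S_one by (intro mcls_in) auto
next
  fix x y z assume "x \<in> carrier (loc_mod R M I)" "y \<in> carrier (loc_mod R M I)" "z \<in> carrier (loc_mod R M I)"
  then obtain a s b t c w where abc: "a \<in> carrier M" "s \<in> Sc" "x = mcls a s"
    "b \<in> carrier M" "t \<in> Sc" "y = mcls b t" "c \<in> carrier M" "w \<in> Sc" "z = mcls c w"
    by (metis lm_elem)
  have e1: "x \<oplus>\<^bsub>loc_mod R M I\<^esub> y \<oplus>\<^bsub>loc_mod R M I\<^esub> z =
     mcls (w \<odot>\<^bsub>M\<^esub> (t \<odot>\<^bsub>M\<^esub> a \<oplus>\<^bsub>M\<^esub> s \<odot>\<^bsub>M\<^esub> b) \<oplus>\<^bsub>M\<^esub> (s \<otimes> t) \<odot>\<^bsub>M\<^esub> c) ((s \<otimes> t) \<otimes> w)"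
    using abc by (simp add: lm_add)
  have e2: "x \<oplus>\<^bsub>loc_mod R M I\<^esub> (y \<oplus>\<^bsub>loc_mod R M I\<^esub> z) =
     mcls ((t \<otimes> w) \<odot>\<^bsub>M\<^esub> a \<oplus>\<^bsub>M\<^esub> s \<odot>\<^bsub>M\<^esub> (w \<odot>\<^bsub>M\<^esub> b \<oplus>\<^bsub>M\<^esub> t \<odot>\<^bsub>M\<^esub> c)) (s \<otimes> (t \<otimes> w))"
    using abc by (simp add: lm_add)
  have "w \<odot>\<^bsub>M\<^esub> (t \<odot>\<^bsub>M\<^esub> a \<oplus>\<^bsub>M\<^esub> s \<odot>\<^bsub>M\<^esub> b) \<oplus>\<^bsub>M\<^esub> (s \<otimes> t) \<odot>\<^bsub>M\<^esub> c =
      (t \<otimes> w) \<odot>\<^bsub>M\<^esub> a \<oplus>\<^bsub>M\<^esub> s \<odot>\<^bsub>M\<^esub> (w \<odot>\<^bsub>M\<^esub> b \<oplus>\<^bsub>M\<^esub> t \<odot>\<^bsub>M\<^esub> c)"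
    using abc by (simp add: smult_r_distr smult_assoc1[symmetric] m_ac M.a_ac)
  moreover have "(s \<otimes> t) \<otimes> w = s \<otimes> (t \<otimes> w)" using abc by (simp add: m_ac)
  ultimately show "x \<oplus>\<^bsub>loc_mod R M I\<^esub> y \<oplus>\<^bsub>loc_mod R M I\<^esub> z = x \<oplus>\<^bsub>loc_mod R M I\<^esub> (y \<oplus>\<^bsub>loc_mod R M I\<^esub> z)"
    unfolding e1 e2 by simp
next
  fix x assume "x \<in> carrier (loc_mod R M I)"
  then show "\<zero>\<^bsub>loc_mod R M I\<^esub> \<oplus>\<^bsub>loc_mod R M I\<^esub> x = x"
    using S_one by (auto elim!: lm_elem simp: lm_add lm_zero)
next
  fix x y assume "x \<in> carrier (loc_mod R M I)" "y \<in> carrier (loc_mod R M I)"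
  then show "x \<oplus>\<^bsub>loc_mod R M I\<^esub> y = y \<oplus>\<^bsub>loc_mod R M I\<^esub> x"
    by (auto elim!: lm_elem simp: lm_add m_ac M.a_ac)
qed

end

context lp
begin

definition "Lset = {cls a s | a s. a \<in> I \<and> s \<in> Sc}"

lemma I_zero: "\<zero> \<in> I"
  using additive_subgroup.zero_closed[OF ideal.axioms(1)[OF is_ideal]] .

lemma I_add: "a \<in> I \<Longrightarrow> b \<in> I \<Longrightarrow> a \<oplus> b \<in> I"
  using additive_subgroup.a_closed[OF ideal.axioms(1)[OF is_ideal]] .

lemma Lset_ideal: "ideal Lset (loc_ring R I)"
proof (rule cring.ideal_crit[OF loc_cring])
  show "Lset \<subseteq> carrier (loc_ring R I)" unfolding Lset_def using Icarr' by (auto intro!: cls_in)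
  show "\<zero>\<^bsub>loc_ring R I\<^esub> \<in> Lset" unfolding Lset_def loc_zero using S_one I_zero by blast
  fix x y assume x: "x \<in> Lset"
  then obtain a s where as: "a \<in> I" "s \<in> Sc" "x = cls a s" unfolding Lset_def by blast
  have ac: "a \<in> carrier R" using as Icarr' by auto
  {
    assume "y \<in> Lset"
    then obtain b t where bt: "b \<in> I" "t \<in> Sc" "y = cls b t" unfolding Lset_def by blast
    have bc: "b \<in> carrier R" using bt Icarr' by auto
    have "x \<oplus>\<^bsub>loc_ring R I\<^esub> y = cls (t \<otimes> a \<oplus> s \<otimes> b) (s \<otimes> t)" using as bt ac bc by (simp add: loc_add)
    moreover have "t \<otimes> a \<oplus> s \<otimes> b \<in> I" using as bt Icarr' by (intro I_add I_l_closed) auto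
    moreover have "s \<otimes> t \<in> Sc" using as bt S_mult by auto
    ultimately show "x \<oplus>\<^bsub>loc_ring R I\<^esub> y \<in> Lset" unfolding Lset_def by blast
  }
  {
    assume "y \<in> carrier (loc_ring R I)"
    then obtain c w where cw: "c \<in> carrier R" "w \<in> Sc" "y = cls c w" by (rule loc_elem)
    have "y \<otimes>\<^bsub>loc_ring R I\<^esub> x = cls (c \<otimes> a) (w \<otimes> s)" using as cw ac by (simp add: loc_mult)
    moreover have "c \<otimes> a \<in> I" using as cw by (simp add: I_l_closed)
    moreover have "w \<otimes> s \<in> Sc" using as cw S_mult by auto
    ultimately show "y \<otimes>\<^bsub>loc_ring R I\<^esub> x \<in> Lset" unfolding Lset_def by blast
  }
qed

lemma loc_ideal_sub: "loc_ideal R I \<subseteq> Lset"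
proof -
  have "loc_map R I ` I \<subseteq> Lset" unfolding loc_map_def Lset_def using S_one by blast
  then show ?thesis unfolding loc_ideal_def
    using ring.genideal_minimal[OF cring.axioms(1)[OF loc_cring] Lset_ideal] by blast
qed

end

context lm
begin

lemma ann_ideal:
  assumes z: "z \<in> carrier M"
  shows "ideal (ann M R z) R"
proof (rule ideal_crit)
  show "ann M R z \<subseteq> carrier R" unfolding ann_def by auto
  show "\<zero> \<in> ann M R z" unfolding ann_def using z by simp
  fix a b assume a: "a \<in> ann M R z"
  {
    assume "b \<in> ann M R z"
    then show "a \<oplus> b \<in> ann M R z" using a z unfolding ann_def by (simp add: smult_l_distr)
  }
  {
    assume "b \<in> carrier R"
    then show "b \<otimes> a \<in> ann M R z" using a z unfolding ann_def by (simp add: smult_assoc1)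
  }
qed

lemma nilp:
  assumes z: "z \<in> carrier M" and mp: "minimal_prime_over R (ann M R z) I" and a: "a \<in> I"
  shows "\<exists>u \<in> Sc. \<exists>n::nat. (u \<otimes> a [^] n) \<odot>\<^bsub>M\<^esub> z = \<zero>\<^bsub>M\<^esub>"
proof (rule ccontr)
  assume H: "\<not> ?thesis"
  have ac: "a \<in> carrier R" using a Icarr' by auto
  define T where "T = {u \<otimes> a [^] (n::nat) | u n. u \<in> Sc}"
  have Tc: "T \<subseteq> carrier R" unfolding T_def using ac by auto
  have ScT: "Sc \<subseteq> T"
  proof
    fix u assume "u \<in> Sc" then have "u = u \<otimes> a [^] (0::nat)" by simp
    with \<open>u \<in> Sc\<close> show "u \<in> T" unfolding T_def by blast
  qed
  have aT: "a \<in> T"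
  proof -
    have "a = \<one> \<otimes> a [^] (1::nat)" using ac by simp
    then show ?thesis unfolding T_def using S_one by blast
  qed
  have Tmult: "t1 \<otimes> t2 \<in> T" if t1T: "t1 \<in> T" and t2T: "t2 \<in> T" for t1 t2
  proof -
    obtain u1 n1 where 1: "u1 \<in> Sc" "t1 = u1 \<otimes> a [^] (n1::nat)" using t1T unfolding T_def by blast
    obtain u2 n2 where 2: "u2 \<in> Sc" "t2 = u2 \<otimes> a [^] (n2::nat)" using t2T unfolding T_def by blast
    have "t1 \<otimes> t2 = (u1 \<otimes> u2) \<otimes> a [^] (n1 + n2)"
      using 1 2 ac by (simp add: nat_pow_mult[symmetric] m_ac)
    moreover have "u1 \<otimes> u2 \<in> Sc" using 1 2 S_mult by auto
    ultimately show ?thesis unfolding T_def by blast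
  qed
  have annT: "ann M R z \<inter> T = {}"
  proof (rule ccontr)
    assume "ann M R z \<inter> T \<noteq> {}"
    then obtain u n where "u \<in> Sc" "(u \<otimes> a [^] (n::nat)) \<odot>\<^bsub>M\<^esub> z = \<zero>\<^bsub>M\<^esub>"
      unfolding T_def ann_def by blast
    then show False using H by blast
  qed
  define Fam where "Fam = {J. ideal J R \<and> ann M R z \<subseteq> J \<and> J \<inter> T = {}}"
  have "\<exists>Q\<in>Fam. \<forall>Y\<in>Fam. Q \<subseteq> Y \<longrightarrow> Y = Q"
  proof (rule subset_Zorn_nonempty)
    show "Fam \<noteq> {}" unfolding Fam_def using ann_ideal[OF z] annT by blast
    fix C assume C: "C \<noteq> {}" "subset.chain Fam C"
    then have ch: "subset.chain {J. ideal J R} C" unfolding pred_on.chain_def Fam_def by auto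
    have "ideal (\<Union>C) R" using chain_Union_is_ideal[OF ch] C(1) by simp
    moreover have "ann M R z \<subseteq> \<Union>C"
    proof -
      obtain J0 where "J0 \<in> C" using C(1) by blast
      moreover have "ann M R z \<subseteq> J0" using C(2) \<open>J0 \<in> C\<close> unfolding pred_on.chain_def Fam_def by blast
      ultimately show ?thesis by blast
    qed
    moreover have "\<Union>C \<inter> T = {}" using C unfolding pred_on.chain_def Fam_def by auto
    ultimately show "\<Union>C \<in> Fam" unfolding Fam_def by blast
  qed
  then obtain Q where QF: "Q \<in> Fam" and Qmax: "\<And>Y. Y \<in> Fam \<Longrightarrow> Q \<subseteq> Y \<Longrightarrow> Y = Q" by blast
  have Qi: "ideal Q R" and annQ: "ann M R z \<subseteq> Q" and QT: "Q \<inter> T = {}" using QF unfolding Fam_def by auto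
  have Qc: "Q \<subseteq> carrier R" using ideal.Icarr[OF Qi] by blast
  have meet: "\<exists>q \<in> Q. \<exists>x \<in> carrier R. q \<oplus> x \<otimes> c \<in> T" if c: "c \<in> carrier R" "c \<notin> Q" for c
  proof -
    let ?X = "Q <+>\<^bsub>R\<^esub> PIdl c"
    have Xi: "ideal ?X R" using add_ideals[OF Qi cgenideal_ideal[OF c(1)]] .
    have QX: "Q \<subseteq> ?X"
    proof
      fix q assume "q \<in> Q"
      moreover have "\<zero> \<otimes> c \<in> PIdl c" unfolding cgenideal_def by blast
      ultimately have "q \<oplus> \<zero> \<otimes> c \<in> ?X" unfolding set_add_def' by blast
      then show "q \<in> ?X" using \<open>q \<in> Q\<close> Qc c by auto
    qed
    have "c \<in> ?X"
    proof -
      have "\<one> \<otimes> c \<in> PIdl c" unfolding cgenideal_def by blast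
      moreover have "\<zero> \<in> Q" using additive_subgroup.zero_closed[OF ideal.axioms(1)[OF Qi]] .
      ultimately have "\<zero> \<oplus> \<one> \<otimes> c \<in> ?X" unfolding set_add_def' by blast
      then show ?thesis using c by simp
    qed
    then have "?X \<noteq> Q" using c by blast
    then have "?X \<notin> Fam" using Qmax QX by blast
    then have "?X \<inter> T \<noteq> {}" unfolding Fam_def using Xi annQ QX by blast
    then obtain t where "t \<in> ?X" "t \<in> T" by blast
    then show ?thesis unfolding set_add_def' cgenideal_def by blast
  qed
  have Qprime: "primeideal Q R"
  proof (rule primeidealI[OF Qi is_cring])
    show "carrier R \<noteq> Q" using QT ScT S_one by blast
    fix x y assume xy: "x \<in> carrier R" "y \<in> carrier R" "x \<otimes> y \<in> Q"
    show "x \<in> Q \<or> y \<in> Q"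
    proof (rule ccontr)
      assume "\<not> (x \<in> Q \<or> y \<in> Q)"
      then obtain q1 x1 q2 x2 where q: "q1 \<in> Q" "x1 \<in> carrier R" "q1 \<oplus> x1 \<otimes> x \<in> T"
        "q2 \<in> Q" "x2 \<in> carrier R" "q2 \<oplus> x2 \<otimes> y \<in> T"
        using meet xy by meson
      have qc: "q1 \<in> carrier R" "q2 \<in> carrier R" using q Qc by auto
      have ca: "q2 \<oplus> x2 \<otimes> y \<in> carrier R" using q qc xy by simp
      have e1: "(q1 \<oplus> x1 \<otimes> x) \<otimes> (q2 \<oplus> x2 \<otimes> y) =
        q1 \<otimes> (q2 \<oplus> x2 \<otimes> y) \<oplus> ((x1 \<otimes> x) \<otimes> q2 \<oplus> (x1 \<otimes> x) \<otimes> (x2 \<otimes> y))"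
      proof -
        have "(q1 \<oplus> x1 \<otimes> x) \<otimes> (q2 \<oplus> x2 \<otimes> y) = q1 \<otimes> (q2 \<oplus> x2 \<otimes> y) \<oplus> (x1 \<otimes> x) \<otimes> (q2 \<oplus> x2 \<otimes> y)"
          using q qc xy ca by (intro l_distr) auto
        also have "(x1 \<otimes> x) \<otimes> (q2 \<oplus> x2 \<otimes> y) = (x1 \<otimes> x) \<otimes> q2 \<oplus> (x1 \<otimes> x) \<otimes> (x2 \<otimes> y)"
          using q qc xy by (intro r_distr) auto
        finally show ?thesis .
      qed
      have e2: "(x1 \<otimes> x) \<otimes> (x2 \<otimes> y) = (x1 \<otimes> x2) \<otimes> (x \<otimes> y)"
        using q qc xy by (simp add: m_ac)
      have Qa: "u \<oplus> v \<in> Q" if "u \<in> Q" "v \<in> Q" for u v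
        using additive_subgroup.a_closed[OF ideal.axioms(1)[OF Qi]] that .
      have "q1 \<otimes> (q2 \<oplus> x2 \<otimes> y) \<in> Q" using q ca ideal.I_r_closed[OF Qi] by simp
      moreover have "(x1 \<otimes> x) \<otimes> q2 \<in> Q" using q qc xy ideal.I_l_closed[OF Qi] by simp
      moreover have "(x1 \<otimes> x2) \<otimes> (x \<otimes> y) \<in> Q" using q qc xy ideal.I_l_closed[OF Qi] by simp
      ultimately have "(q1 \<oplus> x1 \<otimes> x) \<otimes> (q2 \<oplus> x2 \<otimes> y) \<in> Q"
        unfolding e1 e2 by (intro Qa)
      moreover have "(q1 \<oplus> x1 \<otimes> x) \<otimes> (q2 \<oplus> x2 \<otimes> y) \<in> T" using Tmult q by blast
      ultimately show False using QT by blast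
    qed
  qed
  have QI: "Q \<subseteq> I" using Qc QT ScT by blast
  have "Q = I" using mp Qprime annQ QI unfolding minimal_prime_over_def by blast
  then show False using aT QT a by blast
qed

end

context lm
begin

lemma find_w:
  assumes z: "z \<in> carrier M" and nz: "\<forall>u\<in>Sc. u \<odot>\<^bsub>M\<^esub> z \<noteq> \<zero>\<^bsub>M\<^esub>"
    and fin: "finite Fs" and FI: "Fs \<subseteq> I"
    and nil: "\<forall>a\<in>Fs. \<exists>u\<in>Sc. \<exists>n::nat. (u \<otimes> a [^] n) \<odot>\<^bsub>M\<^esub> z = \<zero>\<^bsub>M\<^esub>"
  shows "\<exists>y\<in>carrier M. (\<forall>u\<in>Sc. u \<odot>\<^bsub>M\<^esub> y \<noteq> \<zero>\<^bsub>M\<^esub>) \<and>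
     (\<forall>a\<in>Fs. \<exists>u\<in>Sc. u \<odot>\<^bsub>M\<^esub> (a \<odot>\<^bsub>M\<^esub> y) = \<zero>\<^bsub>M\<^esub>) \<and> (\<exists>b\<in>carrier R. y = b \<odot>\<^bsub>M\<^esub> z)"
  using fin FI nil
proof (induction Fs rule: finite_induct)
  case empty
  show ?case using z nz by (intro bexI[of _ z]) (auto intro!: bexI[of _ \<one>])
next
  case (insert a Fs)
  obtain y b where y: "y \<in> carrier M" "\<forall>u\<in>Sc. u \<odot>\<^bsub>M\<^esub> y \<noteq> \<zero>\<^bsub>M\<^esub>"
    "\<forall>a\<in>Fs. \<exists>u\<in>Sc. u \<odot>\<^bsub>M\<^esub> (a \<odot>\<^bsub>M\<^esub> y) = \<zero>\<^bsub>M\<^esub>" "b \<in> carrier R" "y = b \<odot>\<^bsub>M\<^esub> z"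
    using insert by blast
  have ac: "a \<in> carrier R" using insert(4) Icarr' by auto
  obtain u0 n0 where u0: "u0 \<in> Sc" "(u0 \<otimes> a [^] (n0::nat)) \<odot>\<^bsub>M\<^esub> z = \<zero>\<^bsub>M\<^esub>" using insert(5) by blast
  define N where "N = {n::nat. \<exists>u\<in>Sc. (u \<otimes> a [^] n) \<odot>\<^bsub>M\<^esub> y = \<zero>\<^bsub>M\<^esub>}"
  have "(u0 \<otimes> a [^] n0) \<odot>\<^bsub>M\<^esub> y = b \<odot>\<^bsub>M\<^esub> ((u0 \<otimes> a [^] n0) \<odot>\<^bsub>M\<^esub> z)"
    using u0(1) ac y(4,5) z by (simp add: smult_assoc1[symmetric] m_ac)
  also have "\<dots> = \<zero>\<^bsub>M\<^esub>" using u0 y by simp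
  finally have "n0 \<in> N" unfolding N_def using u0 by blast
  define k0 where "k0 = (LEAST n. n \<in> N)"
  have k0N: "k0 \<in> N" unfolding k0_def using \<open>n0 \<in> N\<close> by (rule LeastI)
  have k0nz: "k0 \<noteq> 0"
  proof
    assume "k0 = 0"
    then obtain u where "u \<in> Sc" "(u \<otimes> a [^] (0::nat)) \<odot>\<^bsub>M\<^esub> y = \<zero>\<^bsub>M\<^esub>" using k0N unfolding N_def by blast
    then show False using y by simp
  qed
  define k where "k = k0 - 1"
  have k0k: "k0 = Suc k" unfolding k_def using k0nz by simp
  have kN: "k \<notin> N" unfolding k_def k0_def
    using not_less_Least k0nz k0_def by (metis diff_less less_numeral_extra(1) not_gr_zero)
  define y' where "y' = (a [^] k) \<odot>\<^bsub>M\<^esub> y"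
  have y'c: "y' \<in> carrier M" unfolding y'_def using ac y by simp
  have i: "\<forall>u\<in>Sc. u \<odot>\<^bsub>M\<^esub> y' \<noteq> \<zero>\<^bsub>M\<^esub>"
  proof (intro ballI notI)
    fix u assume u: "u \<in> Sc" "u \<odot>\<^bsub>M\<^esub> y' = \<zero>\<^bsub>M\<^esub>"
    then have "(u \<otimes> a [^] k) \<odot>\<^bsub>M\<^esub> y = \<zero>\<^bsub>M\<^esub>" unfolding y'_def using ac y by (simp add: smult_assoc1)
    then have "k \<in> N" unfolding N_def using u by blast
    then show False using kN by blast
  qed
  have ii: "\<exists>u\<in>Sc. u \<odot>\<^bsub>M\<^esub> (a \<odot>\<^bsub>M\<^esub> y') = \<zero>\<^bsub>M\<^esub>"
  proof -
    obtain u1 where u1: "u1 \<in> Sc" "(u1 \<otimes> a [^] k0) \<odot>\<^bsub>M\<^esub> y = \<zero>\<^bsub>M\<^esub>" using k0N unfolding N_def by blast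
    have "u1 \<odot>\<^bsub>M\<^esub> (a \<odot>\<^bsub>M\<^esub> y') = (u1 \<otimes> (a [^] k \<otimes> a)) \<odot>\<^bsub>M\<^esub> y"
      unfolding y'_def using u1 ac y by (simp add: smult_assoc1[symmetric] m_ac)
    also have "\<dots> = (u1 \<otimes> a [^] k0) \<odot>\<^bsub>M\<^esub> y" unfolding k0k by simp
    also have "\<dots> = \<zero>\<^bsub>M\<^esub>" by (rule u1(2))
    finally show ?thesis using u1 by blast
  qed
  have iii: "\<forall>a'\<in>Fs. \<exists>u\<in>Sc. u \<odot>\<^bsub>M\<^esub> (a' \<odot>\<^bsub>M\<^esub> y') = \<zero>\<^bsub>M\<^esub>"
  proof
    fix a' assume a': "a' \<in> Fs"
    then obtain u where u: "u \<in> Sc" "u \<odot>\<^bsub>M\<^esub> (a' \<odot>\<^bsub>M\<^esub> y) = \<zero>\<^bsub>M\<^esub>" using y by blast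
    have a'c: "a' \<in> carrier R" using a' insert(4) Icarr' by auto
    have "u \<odot>\<^bsub>M\<^esub> (a' \<odot>\<^bsub>M\<^esub> y') = (a [^] k) \<odot>\<^bsub>M\<^esub> (u \<odot>\<^bsub>M\<^esub> (a' \<odot>\<^bsub>M\<^esub> y))"
      unfolding y'_def using u(1) ac a'c y(1) by (simp add: smult_assoc1[symmetric] m_ac)
    also have "\<dots> = \<zero>\<^bsub>M\<^esub>" using u ac by simp
    finally show "\<exists>u\<in>Sc. u \<odot>\<^bsub>M\<^esub> (a' \<odot>\<^bsub>M\<^esub> y') = \<zero>\<^bsub>M\<^esub>" using u by blast
  qed
  have iv: "y' = (a [^] k \<otimes> b) \<odot>\<^bsub>M\<^esub> z" unfolding y'_def y(5) using ac y z by (simp add: smult_assoc1)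
  show ?case using y'c i ii iii iv ac y(4) by (intro bexI[of _ y']) auto
qed


lemma nz_z:
  assumes z: "z \<in> carrier M" and mp: "minimal_prime_over R (ann M R z) I"
  shows "\<forall>u\<in>Sc. u \<odot>\<^bsub>M\<^esub> z \<noteq> \<zero>\<^bsub>M\<^esub>"
proof (intro ballI notI)
  fix u assume "u \<in> Sc" "u \<odot>\<^bsub>M\<^esub> z = \<zero>\<^bsub>M\<^esub>"
  then have "u \<in> ann M R z" unfolding ann_def by auto
  then have "u \<in> I" using mp unfolding minimal_prime_over_def by blast
  then show False using \<open>u \<in> Sc\<close> by blast
qed

lemma zero_divisor:
  assumes z: "z \<in> carrier M" and mp: "minimal_prime_over R (ann M R z) I"
    and x: "x \<in> carrier (poly_ring (loc_ring R I) m)" and xL: "\<forall>\<alpha>. x \<alpha> \<in> Lset"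
  shows "\<exists>v \<in> carrier (poly_mod (loc_ring R I) (loc_mod R M I) m).
           x \<odot>\<^bsub>poly_mod (loc_ring R I) (loc_mod R M I) m\<^esub> v = \<zero>\<^bsub>poly_mod (loc_ring R I) (loc_mod R M I) m\<^esub> \<and>
           v \<noteq> \<zero>\<^bsub>poly_mod (loc_ring R I) (loc_mod R M I) m\<^esub>"
proof -
  interpret cA: cr "loc_ring R I" unfolding cr_def by (rule loc_cring)
  define N where "N = loc_mod R M I"
  define supp where "supp = {\<alpha>. x \<alpha> \<noteq> \<zero>\<^bsub>loc_ring R I\<^esub>}"
  have finsupp: "finite supp" unfolding supp_def using cA.pc_fin[OF x] .
  have ex: "\<exists>p. fst p \<in> I \<and> snd p \<in> Sc \<and> x \<alpha> = cls (fst p) (snd p)" for \<alpha>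
    using xL unfolding Lset_def by fastforce
  define ra where "ra = (\<lambda>\<alpha>. SOME p. fst p \<in> I \<and> snd p \<in> Sc \<and> x \<alpha> = cls (fst p) (snd p))"
  have ra: "fst (ra \<alpha>) \<in> I \<and> snd (ra \<alpha>) \<in> Sc \<and> x \<alpha> = cls (fst (ra \<alpha>)) (snd (ra \<alpha>))" for \<alpha>
    unfolding ra_def using someI_ex[OF ex] .
  define Fs where "Fs = (\<lambda>\<alpha>. fst (ra \<alpha>)) ` supp"
  have "finite Fs" unfolding Fs_def using finsupp by simp
  moreover have "Fs \<subseteq> I" unfolding Fs_def using ra by auto
  moreover have "\<forall>a\<in>Fs. \<exists>u\<in>Sc. \<exists>n::nat. (u \<otimes> a [^] n) \<odot>\<^bsub>M\<^esub> z = \<zero>\<^bsub>M\<^esub>"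
    using nilp[OF z mp] calculation(2) by blast
  ultimately obtain y where y: "y \<in> carrier M" "\<forall>u\<in>Sc. u \<odot>\<^bsub>M\<^esub> y \<noteq> \<zero>\<^bsub>M\<^esub>"
    "\<forall>a\<in>Fs. \<exists>u\<in>Sc. u \<odot>\<^bsub>M\<^esub> (a \<odot>\<^bsub>M\<^esub> y) = \<zero>\<^bsub>M\<^esub>"
    using find_w[OF z nz_z[OF z mp]] by blast
  define w where "w = mcls y \<one>"
  have wc: "w \<in> carrier N" unfolding w_def N_def using y S_one by (intro mcls_in) auto
  have zc: "\<zero>\<^bsub>N\<^esub> \<in> carrier N" unfolding N_def lm_zero using S_one by (intro mcls_in) auto
  have wnz: "w \<noteq> \<zero>\<^bsub>N\<^esub>"
  proof
    assume "w = \<zero>\<^bsub>N\<^esub>"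
    then have "mcls y \<one> = mcls \<zero>\<^bsub>M\<^esub> \<one>" unfolding w_def N_def lm_zero .
    then obtain u where "u \<in> Sc" "u \<odot>\<^bsub>M\<^esub> (\<one> \<odot>\<^bsub>M\<^esub> y) = u \<odot>\<^bsub>M\<^esub> (\<one> \<odot>\<^bsub>M\<^esub> \<zero>\<^bsub>M\<^esub>)"
      using mcls_eq y S_one by blast
    then have "u \<odot>\<^bsub>M\<^esub> y = \<zero>\<^bsub>M\<^esub>" using y by simp
    then show False using y \<open>u \<in> Sc\<close> by blast
  qed
  define v where "v = (\<lambda>\<alpha>::nat\<Rightarrow>nat. if \<alpha> = (\<lambda>_. 0) then w else \<zero>\<^bsub>N\<^esub>)"
  have "{\<alpha>. v \<alpha> \<noteq> \<zero>\<^bsub>N\<^esub>} \<subseteq> {\<lambda>_. 0}" unfolding v_def by auto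
  then have "finite {\<alpha>. v \<alpha> \<noteq> \<zero>\<^bsub>N\<^esub>}" by (rule finite_subset) simp
  then have vc: "v \<in> carrier (poly_mod (loc_ring R I) N m)"
    unfolding poly_mod_def using wc zc mons_zero by (auto simp: v_def)
  have T: "x \<beta> \<odot>\<^bsub>N\<^esub> v \<gamma> = \<zero>\<^bsub>N\<^esub>" for \<beta> \<gamma>
  proof (cases "\<gamma> = (\<lambda>_. 0)")
    case False
    obtain a s where as: "a \<in> I" "s \<in> Sc" "x \<beta> = cls a s" using ra[of \<beta>] by blast
    have ac: "a \<in> carrier R" using as Icarr' by auto
    have "x \<beta> \<odot>\<^bsub>N\<^esub> v \<gamma> = mcls (a \<odot>\<^bsub>M\<^esub> \<zero>\<^bsub>M\<^esub>) (s \<otimes> \<one>)"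
      unfolding v_def N_def lm_zero using False as ac S_one by (simp add: lm_smult)
    also have "\<dots> = mcls \<zero>\<^bsub>M\<^esub> \<one>" using ac as S_one by (intro mcls_eqI) auto
    finally show ?thesis unfolding N_def lm_zero .
  next
    case True
    show ?thesis
    proof (cases "\<beta> \<in> supp")
      case False
      then have "x \<beta> = cls \<zero> \<one>" unfolding supp_def loc_zero by simp
      then have "x \<beta> \<odot>\<^bsub>N\<^esub> v \<gamma> = mcls (\<zero> \<odot>\<^bsub>M\<^esub> y) (\<one> \<otimes> \<one>)"
        unfolding v_def w_def N_def using True y(1) S_one by (simp add: lm_smult)
      also have "\<dots> = mcls \<zero>\<^bsub>M\<^esub> \<one>" using y by simp
      finally show ?thesis unfolding N_def lm_zero .
    next
      case True2: True
      define a where "a = fst (ra \<beta>)"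
      define s where "s = snd (ra \<beta>)"
      have as: "a \<in> I" "s \<in> Sc" "x \<beta> = cls a s" unfolding a_def s_def using ra[of \<beta>] by auto
      have ac: "a \<in> carrier R" using as Icarr' by auto
      have "a \<in> Fs" unfolding Fs_def a_def using True2 by blast
      then obtain u where u: "u \<in> Sc" "u \<odot>\<^bsub>M\<^esub> (a \<odot>\<^bsub>M\<^esub> y) = \<zero>\<^bsub>M\<^esub>" using y(3) by blast
      have "x \<beta> \<odot>\<^bsub>N\<^esub> v \<gamma> = mcls (a \<odot>\<^bsub>M\<^esub> y) (s \<otimes> \<one>)"
        unfolding v_def w_def N_def using True as(2,3) ac y(1) S_one by (simp add: lm_smult)
      also have "\<dots> = mcls \<zero>\<^bsub>M\<^esub> \<one>"
      proof -
        have "u \<odot>\<^bsub>M\<^esub> (\<one> \<odot>\<^bsub>M\<^esub> (a \<odot>\<^bsub>M\<^esub> y)) = u \<odot>\<^bsub>M\<^esub> ((s \<otimes> \<one>) \<odot>\<^bsub>M\<^esub> \<zero>\<^bsub>M\<^esub>)"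
          using u ac y(1) as(2) by simp
        moreover have "a \<odot>\<^bsub>M\<^esub> y \<in> carrier M" using ac y(1) by simp
        moreover have "s \<otimes> \<one> \<in> Sc" using as(2) S_one S_mult by blast
        ultimately show ?thesis using mcls_eq[of "a \<odot>\<^bsub>M\<^esub> y" "s \<otimes> \<one>" "\<zero>\<^bsub>M\<^esub>" \<one>] u(1) S_one by auto
      qed
      finally show ?thesis unfolding N_def lm_zero .
    qed
  qed
  have am: "abelian_monoid N" unfolding N_def by (rule lm_abelian_monoid)
  have "x \<odot>\<^bsub>poly_mod (loc_ring R I) N m\<^esub> v = (\<lambda>\<alpha>. \<zero>\<^bsub>N\<^esub>)"
  proof
    fix \<alpha>
    show "(x \<odot>\<^bsub>poly_mod (loc_ring R I) N m\<^esub> v) \<alpha> = \<zero>\<^bsub>N\<^esub>"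
      unfolding poly_mod_def by (simp add: T abelian_monoid.finsum_zero[OF am])
  qed
  moreover have "v \<noteq> (\<lambda>\<alpha>. \<zero>\<^bsub>N\<^esub>)"
  proof
    assume "v = (\<lambda>\<alpha>. \<zero>\<^bsub>N\<^esub>)"
    then have "v (\<lambda>_. 0) = \<zero>\<^bsub>N\<^esub>" by simp
    then show False using wnz unfolding v_def by simp
  qed
  moreover have "\<zero>\<^bsub>poly_mod (loc_ring R I) N m\<^esub> = (\<lambda>\<alpha>. \<zero>\<^bsub>N\<^esub>)" unfolding poly_mod_def by simp
  ultimately show ?thesis using vc unfolding N_def by metis
qed

end

context lm
begin

lemma grade_zero:
  assumes z: "z \<in> carrier M" and mp: "minimal_prime_over R (ann M R z) I"
  shows "grade (poly_ring (loc_ring R I) m)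
           (genideal (poly_ring (loc_ring R I) m) (const_poly (loc_ring R I) ` loc_ideal R I))
           (poly_mod (loc_ring R I) (loc_mod R M I) m) = 0"
proof -
  interpret cA: cr "loc_ring R I" unfolding cr_def by (rule loc_cring)
  define PA where "PA = poly_ring (loc_ring R I) m"
  define PN where "PN = poly_mod (loc_ring R I) (loc_mod R M I) m"
  define G where "G = genideal PA (const_poly (loc_ring R I) ` loc_ideal R I)"
  define K where "K = {f \<in> carrier PA. \<forall>\<alpha>. f \<alpha> \<in> Lset}"
  have Kid: "ideal K PA" unfolding K_def PA_def by (rule cA.poly_ideal[OF Lset_ideal])
  have Lsub: "Lset \<subseteq> carrier (loc_ring R I)" using ideal.Icarr[OF Lset_ideal] by blast
  have L0: "\<zero>\<^bsub>loc_ring R I\<^esub> \<in> Lset"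
    using additive_subgroup.zero_closed[OF ideal.axioms(1)[OF Lset_ideal]] .
  have "const_poly (loc_ring R I) ` loc_ideal R I \<subseteq> K"
  proof
    fix f assume "f \<in> const_poly (loc_ring R I) ` loc_ideal R I"
    then obtain c where c: "c \<in> loc_ideal R I" "f = const_poly (loc_ring R I) c" by blast
    have cL: "c \<in> Lset" using c loc_ideal_sub by blast
    have "f \<in> carrier PA" unfolding PA_def c(2) using cL Lsub by (intro cA.const_poly_closed) blast
    moreover have "\<forall>\<alpha>. f \<alpha> \<in> Lset" unfolding c(2) const_poly_def using cL L0 by simp
    ultimately show "f \<in> K" unfolding K_def by blast
  qed
  then have GK: "G \<subseteq> K" unfolding G_def PA_def
    using ring.genideal_minimal[OF cring.axioms(1)[OF cA.poly_cring]] Kid unfolding PA_def by blast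
  have zPN: "\<zero>\<^bsub>PN\<^esub> \<in> carrier PN" unfolding PN_def poly_mod_def
    using mcls_in[OF M.zero_closed S_one] by (simp add: lm_zero)
  have ss: "seq_submod PN [] = {\<zero>\<^bsub>PN\<^esub>}"
  proof -
    have "finsum PN f {} = \<zero>\<^bsub>PN\<^esub>" for f
      unfolding finsum_def finprod_def using zPN by simp
    then show ?thesis unfolding seq_submod_def by auto
  qed
  have only_nil: "xs = []" if xs: "reg_seq PA PN xs" "set xs \<subseteq> G" for xs
  proof (rule ccontr)
    assume "xs \<noteq> []"
    then obtain x r where xr: "xs = x # r" by (cases xs) auto
    then have "x \<in> K" using xs(2) GK by auto
    then have "x \<in> carrier PA" "\<forall>\<alpha>. x \<alpha> \<in> Lset" unfolding K_def by auto
    then obtain v where v: "v \<in> carrier PN" "x \<odot>\<^bsub>PN\<^esub> v = \<zero>\<^bsub>PN\<^esub>" "v \<noteq> \<zero>\<^bsub>PN\<^esub>"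
      using zero_divisor[OF z mp] unfolding PA_def PN_def by blast
    have "(xs ! 0) \<odot>\<^bsub>PN\<^esub> v \<in> seq_submod PN (take 0 xs) \<longrightarrow> v \<in> seq_submod PN (take 0 xs)"
      using xs(1) v(1) xr unfolding reg_seq_def by auto
    then show False using v ss xr by simp
  qed
  have "{enat (length xs) | xs. reg_seq PA PN xs \<and> set xs \<subseteq> G} = {0}"
  proof
    show "{enat (length xs) | xs. reg_seq PA PN xs \<and> set xs \<subseteq> G} \<subseteq> {0}"
      using only_nil by (auto simp: zero_enat_def)
    have "reg_seq PA PN []" unfolding reg_seq_def by simp
    then show "{0} \<subseteq> {enat (length xs) | xs. reg_seq PA PN xs \<and> set xs \<subseteq> G}"
      by (auto simp: zero_enat_def intro!: exI[of _ "[]"])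
  qed
  then show ?thesis unfolding grade_def PA_def PN_def G_def by simp
qed

end

theorem lemma2p7:
  fixes R :: "'a ring" and M :: "('a, 'b) module" and P :: "'a set"
  assumes "module R M"
    and "weakly_associated R M P"
  shows "p_grade (loc_ring R P) (loc_ideal R P) (loc_mod R M P) = 0"
proof -
  obtain z where z: "z \<in> carrier M" and mp: "minimal_prime_over R (ann M R z) P"
    using assms(2) unfolding weakly_associated_def by blast
  have pp: "primeideal P R" using mp unfolding minimal_prime_over_def by blast
  interpret L: lm P R M unfolding lm_def lp_def using pp assms(1) by blast
  show ?thesis unfolding p_grade_def using L.grade_zero[OF z mp] by simp
qed

end
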